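(* Let $G$ be a group and $\kappa\le|G|$ an infinite cardinal. The following are equivalent: (1) the ball structure $\mathcal E_{[G]^{<\kappa}}$ has a linearly ordered base; (2) the bornology $[G]^{<\kappa}$ of the ballean $(G,\mathcal E_{[G]^{<\kappa}})$ has a linearly ordered base; (3) the ballean $(G,\mathcal E_{[G]^{<\kappa}})$ has bounded growth; (4) $|G|=\kappa$ and $\kappa$ is a regular cardinal. If $\kappa$ is regular or the group $G$ is solvable, then (1)–(4) are also equivalent to: (5) the ballean $(G,\mathcal E_{[G]^{<\kappa}})$ is normal.
   Context: A ballean is a pair $(X,\mathcal E_X)$ where $X$ is a set and $\mathcal E_X$ is a family of subsets of $X\times X$ (entourages) such that: each $E\in\mathcal E_X$ contains the diagonal; for any $E,F\in\mathcal E_X$ there is $D\in\mathcal E_X$ with $E\circ F^{-1}\subset D$; and $\bigcup\mathcal E_X=X\times X$. For $E\subset X\times X$, $x\in X$, $A\subset X$: $E[x]=\{y:(x,y)\in E\}$, $E[A]=\bigcup_{a\in A}E[a]$. $B\subset X$ is bounded if $B\subset E[x]$ for some $E\in\mathcal E_X$, $x\in X$; $\mathcal B_X$ is the family of bounded sets. Sets $A,B$ are asymptotically disjoint if $E[A]\cap E[B]\in\mathcal B_X$ for all $E\in\mathcal E_X$; $U$ is an asymptotic neighborhood of $A$ if $E[A]\setminus U\in\mathcal B_X$ for all $E$; $X$ is normal if any two asymptotically disjoint sets have disjoint asymptotic neighborhoods. $X$ has bounded growth if there is $\Gamma\subset X\times X$ with $\Gamma[B]$ bounded for all bounded $B$,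 and for each $E\in\mathcal E_X$ a bounded $B$ with $E[x]\subset\Gamma[x]$ for all $x\in X\setminus B$. A family of sets has a linearly ordered base if it has a subfamily linearly ordered by inclusion such that each member of the family is contained in some member of the subfamily. For a group $G$, $[G]^{<\kappa}$ is the family of subsets of $G$ of cardinality $<\kappa$, and $\mathcal E_{[G]^{<\kappa}}$ is the ball structure on $G$ consisting of the entourages $E_I=\{(x,y)\in G\times G:y\in\{x\}\cup Ix\}$, $I\in[G]^{<\kappa}$; the bounded sets of this ballean are exactly the members of $[G]^{<\kappa}$. *)

theory Defs
  imports "HOL-Algebra.Solvable_Groups"
begin

unbundle cardinal_syntax

definition bounded_in :: "'a set \<Rightarrow> ('a \<times> 'a) set set \<Rightarrow> 'a set \<Rightarrow> bool" where
  "bounded_in X \<E> B \<longleftrightarrow> (\<exists>E\<in>\<E>. \<exists>x\<in>X. B \<subseteq> E `` {x})"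

definition bornology :: "'a set \<Rightarrow> ('a \<times> 'a) set set \<Rightarrow> 'a set set" where
  "bornology X \<E> = {B. bounded_in X \<E> B}"

definition asymp_disjoint :: "'a set \<Rightarrow> ('a \<times> 'a) set set \<Rightarrow> 'a set \<Rightarrow> 'a set \<Rightarrow> bool" where
  "asymp_disjoint X \<E> A B \<longleftrightarrow> (\<forall>E\<in>\<E>. bounded_in X \<E> (E `` A \<inter> E `` B))"

definition asymp_nbhd :: "'a set \<Rightarrow> ('a \<times> 'a) set set \<Rightarrow> 'a set \<Rightarrow> 'a set \<Rightarrow> bool" where
  "asymp_nbhd X \<E> U A \<longleftrightarrow> (\<forall>E\<in>\<E>. bounded_in X \<E> (E `` A - U))"

definition normal_ballean :: "'a set \<Rightarrow> ('a \<times> 'a) set set \<Rightarrow> bool" where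
  "normal_ballean X \<E> \<longleftrightarrow>
     (\<forall>A B. A \<subseteq> X \<longrightarrow> B \<subseteq> X \<longrightarrow> asymp_disjoint X \<E> A B \<longrightarrow>
        (\<exists>U V. U \<subseteq> X \<and> V \<subseteq> X \<and> asymp_nbhd X \<E> U A \<and> asymp_nbhd X \<E> V B \<and> U \<inter> V = {}))"

definition bounded_growth :: "'a set \<Rightarrow> ('a \<times> 'a) set set \<Rightarrow> bool" where
  "bounded_growth X \<E> \<longleftrightarrow>
     (\<exists>\<Gamma>. \<Gamma> \<subseteq> X \<times> X \<and>
        (\<forall>B. bounded_in X \<E> B \<longrightarrow> bounded_in X \<E> (\<Gamma> `` B)) \<and>
        (\<forall>E\<in>\<E>. \<exists>B. bounded_in X \<E> B \<and> (\<forall>x\<in>X - B. E `` {x} \<subseteq> \<Gamma> `` {x})))"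

definition lin_ordered_base :: "'c set set \<Rightarrow> bool" where
  "lin_ordered_base \<F> \<longleftrightarrow>
     (\<exists>\<L> \<subseteq> \<F>. (\<forall>A\<in>\<L>. \<forall>B\<in>\<L>. A \<subseteq> B \<or> B \<subseteq> A) \<and> (\<forall>A\<in>\<F>. \<exists>B\<in>\<L>. A \<subseteq> B))"

definition small_subsets :: "('a, 'm) monoid_scheme \<Rightarrow> 'b rel \<Rightarrow> 'a set set" where
  "small_subsets G \<kappa> = {I. I \<subseteq> carrier G \<and> |I| <o \<kappa>}"

definition ent :: "('a, 'm) monoid_scheme \<Rightarrow> 'a set \<Rightarrow> ('a \<times> 'a) set" where
  "ent G I = {(x, y). x \<in> carrier G \<and> y \<in> carrier G \<and> (y = x \<or> (\<exists>i\<in>I. y = i \<otimes>\<^bsub>G\<^esub> x))}"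

definition ball_structure :: "('a, 'm) monoid_scheme \<Rightarrow> 'b rel \<Rightarrow> ('a \<times> 'a) set set" where
  "ball_structure G \<kappa> = ent G ` small_subsets G \<kappa>"

end

theory Submission
  imports Defs
begin

lemma greedy:
  assumes wfR: "wf R"
    and dep: "\<And>f g v. (\<And>u. (u,v) \<in> R \<Longrightarrow> f u = g u) \<Longrightarrow> F f v = F g v"
    and ne: "\<And>f v. P v \<Longrightarrow> S - F f v \<noteq> {}"
  shows "\<exists>f. \<forall>v. P v \<longrightarrow> f v \<in> S \<and> f v \<notin> F f v"
proof -
  define H where "H = (\<lambda>f v. SOME x. x \<in> S \<and> x \<notin> F f v)"
  define f where "f = wfrec R H"
  have "P v \<longrightarrow> f v \<in> S \<and> f v \<notin> F f v" for v
  proof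
    assume Pv: "P v"
    have eq: "f v = H (cut f R v) v" unfolding f_def by (rule wfrec[OF wfR])
    have FF: "F (cut f R v) v = F f v" by (rule dep) (simp add: cut_apply)
    have "\<exists>x. x \<in> S \<and> x \<notin> F f v" using ne[OF Pv, of f] by blast
    hence "H (cut f R v) v \<in> S \<and> H (cut f R v) v \<notin> F f v"
      unfolding H_def FF by (rule someI_ex)
    thus "f v \<in> S \<and> f v \<notin> F f v" using eq by simp
  qed
  thus ?thesis by blast
qed

lemma lobE: assumes "lin_ordered_base F"
  obtains L where "L \<subseteq> F" "\<forall>A\<in>L. \<forall>B\<in>L. A\<subseteq>B \<or> B\<subseteq>A" "\<forall>A\<in>F. \<exists>B\<in>L. A\<subseteq>B"
  using assms unfolding lin_ordered_base_def by (elim exE conjE) (rule that, assumption+)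
lemma lobI: assumes "L \<subseteq> F" "\<forall>A\<in>L. \<forall>B\<in>L. A\<subseteq>B \<or> B\<subseteq>A" "\<forall>A\<in>F. \<exists>B\<in>L. A\<subseteq>B" shows "lin_ordered_base F"
  unfolding lin_ordered_base_def
  apply (rule exI[of _ L])
  using assms apply (intro conjI)
    apply assumption+
  done

lemma small_times_gen:
  assumes r: "Card_order r" and inf: "\<not> finite (Field r)"
    and A: "|A| <o r" and B: "|B| <o r"
  shows "|A \<times> B| <o r"
proof (cases "finite (A \<times> B)")
  case True
  thus ?thesis using r inf
    by (metis Field_card_of card_of_Well_order card_order_on_well_order_on finite_ordLess_infinite)
next
  case False
  hence ne: "A \<noteq> {}" "B \<noteq> {}" by auto
  have wo: "Well_order |A|" "Well_order |B|" by (simp_all add: card_of_Well_order)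
  show ?thesis
  proof (cases "|B| \<le>o |A|")
    case True
    hence "\<not> finite A" using False ne card_of_ordLeq_finite finite_cartesian_product by blast
    hence "|A \<times> B| =o |A|" using card_of_Times_infinite[of A B] True ne by blast
    thus ?thesis using A ordIso_ordLess_trans by blast
  next
    case False2: False
    hence le: "|A| \<le>o |B|" using wo ordLess_imp_ordLeq not_ordLeq_iff_ordLess by blast
    hence "\<not> finite B" using False ne card_of_ordLeq_finite finite_cartesian_product by blast
    hence "|B \<times> A| =o |B|" using card_of_Times_infinite[of B A] le ne by blast
    hence "|A \<times> B| =o |B|" using card_of_Times_commute ordIso_transitive by blast
    thus ?thesis using B ordIso_ordLess_trans by blast
  qed
qed


locale bsetup = group G for G :: "('a,'m) monoid_scheme" (structure) +
  fixes \<kappa> :: "'b rel"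
  assumes co: "Card_order \<kappa>" and inf: "\<not> finite (Field \<kappa>)"
    and kle: "\<kappa> \<le>o |carrier G|"
begin

lemma grp: "group G" by (rule group_axioms)

lemma rcan: "i \<in> carrier G \<Longrightarrow> j \<in> carrier G \<Longrightarrow> x \<in> carrier G \<Longrightarrow> i \<otimes> x = j \<otimes> x \<Longrightarrow> i = j"
proof -
  assume c: "i \<in> carrier G" "j \<in> carrier G" "x \<in> carrier G" and e: "i \<otimes> x = j \<otimes> x"
  have "i = (i \<otimes> x) \<otimes> inv x" using c by (simp add: m_assoc)
  also have "\<dots> = (j \<otimes> x) \<otimes> inv x" using e by simp
  also have "\<dots> = j" using c by (simp add: m_assoc)
  finally show ?thesis .
qed

lemma wo: "Well_order \<kappa>" using co by (simp add: card_order_on_well_order_on)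

lemma fin_small: "finite A \<Longrightarrow> |A| <o \<kappa>"
  by (rule finite_ordLess_infinite) (simp_all add: card_of_Well_order card_of_well_order_on wo inf Field_card_of)

lemma small_mono: "A \<subseteq> B \<Longrightarrow> |B| <o \<kappa> \<Longrightarrow> |A| <o \<kappa>"
  using card_of_mono1 ordLeq_ordLess_trans by blast

lemma small_Un: "|A| <o \<kappa> \<Longrightarrow> |B| <o \<kappa> \<Longrightarrow> |A \<union> B| <o \<kappa>"
  using card_of_Un_ordLess_infinite_Field[OF inf co] by blast

lemma small_insert: "|A| <o \<kappa> \<Longrightarrow> |insert a A| <o \<kappa>"
  using small_Un[of "{a}" A] fin_small[of "{a}"] by simp

lemma small_image: "|A| <o \<kappa> \<Longrightarrow> |f ` A| <o \<kappa>"
  using card_of_image ordLeq_ordLess_trans by blast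

lemma small_times: "|A| <o \<kappa> \<Longrightarrow> |B| <o \<kappa> \<Longrightarrow> |A \<times> B| <o \<kappa>"
  using small_times_gen[OF co inf] by blast

lemma small_inj: "inj_on f A \<Longrightarrow> f ` A \<subseteq> B \<Longrightarrow> |B| <o \<kappa> \<Longrightarrow> |A| <o \<kappa>"
proof -
  assume "inj_on f A" "f ` A \<subseteq> B" "|B| <o \<kappa>"
  hence "|A| \<le>o |B|" unfolding card_of_ordLeq[symmetric] by blast
  thus ?thesis using \<open>|B| <o \<kappa>\<close> ordLeq_ordLess_trans by blast
qed

lemma carrier_inf: "\<not> finite (carrier G)"
proof -
  have "|Field \<kappa>| \<le>o |carrier G|" using card_of_Field_ordIso[OF co] kle ordIso_ordLeq_trans by blast
  thus ?thesis using inf card_of_ordLeq_infinite by blast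
qed

lemma ent_sub: "ent G I \<subseteq> carrier G \<times> carrier G"
  unfolding ent_def by auto

lemma ent_mono: "I \<subseteq> J \<Longrightarrow> ent G I \<subseteq> ent G J"
  unfolding ent_def by auto

lemma ent_Image: "y \<in> ent G I `` S \<longleftrightarrow> y \<in> carrier G \<and> (\<exists>x\<in>S. x \<in> carrier G \<and> (y = x \<or> (\<exists>i\<in>I. y = i \<otimes>\<^bsub>G\<^esub> x)))"
  unfolding ent_def by auto

lemma ent_in: "I \<subseteq> carrier G \<Longrightarrow> |I| <o \<kappa> \<Longrightarrow> ent G I \<in> ball_structure G \<kappa>"
  unfolding ball_structure_def small_subsets_def by blast

lemma ball_E: "E \<in> ball_structure G \<kappa> \<Longrightarrow> \<exists>I. I \<subseteq> carrier G \<and> |I| <o \<kappa> \<and> E = ent G I"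
  unfolding ball_structure_def small_subsets_def by blast

lemma bounded_iff: "bounded_in (carrier G) (ball_structure G \<kappa>) B \<longleftrightarrow> B \<subseteq> carrier G \<and> |B| <o \<kappa>"
proof
  assume "bounded_in (carrier G) (ball_structure G \<kappa>) B"
  then obtain E x where E: "E \<in> ball_structure G \<kappa>" and x: "x \<in> carrier G" and B: "B \<subseteq> E `` {x}"
    unfolding bounded_in_def by blast
  obtain I where I: "I \<subseteq> carrier G" "|I| <o \<kappa>" "E = ent G I" using ball_E[OF E] by blast
  have "E `` {x} \<subseteq> insert x ((\<lambda>i. i \<otimes>\<^bsub>G\<^esub> x) ` I)"
  proof
    fix y assume "y \<in> E `` {x}"
    hence "y \<in> ent G I `` {x}" using I(3) by simp
    hence "y \<in> carrier G \<and> (\<exists>x'\<in>{x}. x' \<in> carrier G \<and> (y = x' \<or> (\<exists>i\<in>I. y = i \<otimes>\<^bsub>G\<^esub> x')))"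
      by (simp only: ent_Image)
    thus "y \<in> insert x ((\<lambda>i. i \<otimes>\<^bsub>G\<^esub> x) ` I)" by blast
  qed
  moreover have "|insert x ((\<lambda>i. i \<otimes>\<^bsub>G\<^esub> x) ` I)| <o \<kappa>" by (rule small_insert[OF small_image[OF I(2)]])
  moreover have "E `` {x} \<subseteq> carrier G" using I(3) ent_sub by blast
  ultimately have "B \<subseteq> insert x ((\<lambda>i. i \<otimes>\<^bsub>G\<^esub> x) ` I)" "B \<subseteq> carrier G" 
      "|insert x ((\<lambda>i. i \<otimes>\<^bsub>G\<^esub> x) ` I)| <o \<kappa>" using B by blast+
  thus "B \<subseteq> carrier G \<and> |B| <o \<kappa>" using small_mono[of B] by simp
next
  assume B: "B \<subseteq> carrier G \<and> |B| <o \<kappa>"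
  have "B \<subseteq> ent G B `` {\<one>\<^bsub>G\<^esub>}"
  proof
    fix y assume y: "y \<in> B"
    hence "y \<in> carrier G" using B by blast
    hence "y = y \<otimes>\<^bsub>G\<^esub> \<one>\<^bsub>G\<^esub>" using group.is_monoid[OF grp] by (simp add: monoid.r_one)
    moreover have "\<one>\<^bsub>G\<^esub> \<in> carrier G" using group.is_monoid[OF grp] monoid.one_closed by blast
    ultimately show "y \<in> ent G B `` {\<one>\<^bsub>G\<^esub>}" using y \<open>y \<in> carrier G\<close> unfolding ent_Image by blast
  qed
  thus "bounded_in (carrier G) (ball_structure G \<kappa>) B"
  proof -
    have "\<one>\<^bsub>G\<^esub> \<in> carrier G" using group.is_monoid[OF grp] monoid.one_closed by blast
    moreover have "ent G B \<in> ball_structure G \<kappa>" using ent_in B by blast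
    ultimately show ?thesis unfolding bounded_in_def using \<open>B \<subseteq> ent G B `` {\<one>\<^bsub>G\<^esub>}\<close> by blast
  qed
qed

lemma bnd_sub: "bounded_in (carrier G) (ball_structure G \<kappa>) B \<Longrightarrow> A \<subseteq> B \<Longrightarrow> bounded_in (carrier G) (ball_structure G \<kappa>) A"
  unfolding bounded_iff using small_mono[of A B] by (simp add: subset_trans)

lemma bornology_eq: "bornology (carrier G) (ball_structure G \<kappa>) = {B. B \<subseteq> carrier G \<and> |B| <o \<kappa>}"
  unfolding bornology_def bounded_iff by blast

end

context bsetup
begin

lemma wor: "wo_rel \<kappa>" unfolding wo_rel_def using wo .

lemma kTOT: "a \<in> Field \<kappa> \<Longrightarrow> b \<in> Field \<kappa> \<Longrightarrow> (a,b) \<in> \<kappa> \<or> (b,a) \<in> \<kappa>"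
  using wo_rel.TOTALS[OF wor] by blast

lemma kTRANS: "(a,b) \<in> \<kappa> \<Longrightarrow> (b,c) \<in> \<kappa> \<Longrightarrow> (a,c) \<in> \<kappa>"
  using wo_rel.TRANS[OF wor] unfolding trans_def by blast

lemma under_small: "a \<in> Field \<kappa> \<Longrightarrow> |under \<kappa> a| <o \<kappa>"
proof -
  assume a: "a \<in> Field \<kappa>"
  have "under \<kappa> a = underS \<kappa> a \<union> {a}" using Refl_under_underS[OF wo_rel.REFL[OF wor] a] .
  thus ?thesis using card_of_underS[OF co a] small_insert[of "underS \<kappa> a" a] by simp
qed

lemma under_chain: "a \<in> Field \<kappa> \<Longrightarrow> b \<in> Field \<kappa> \<Longrightarrow> under \<kappa> a \<subseteq> under \<kappa> b \<or> under \<kappa> b \<subseteq> under \<kappa> a"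
  using kTOT[of a b] kTRANS unfolding under_def by blast

lemma sub_ent_one: "B \<subseteq> carrier G \<Longrightarrow> B \<subseteq> ent G B `` {\<one>\<^bsub>G\<^esub>}"
proof
  fix y assume B: "B \<subseteq> carrier G" and y: "y \<in> B"
  hence yc: "y \<in> carrier G" by blast
  hence "y = y \<otimes>\<^bsub>G\<^esub> \<one>\<^bsub>G\<^esub>" using group.is_monoid[OF grp] by (simp add: monoid.r_one)
  moreover have "\<one>\<^bsub>G\<^esub> \<in> carrier G" using group.is_monoid[OF grp] monoid.one_closed by blast
  ultimately show "y \<in> ent G B `` {\<one>\<^bsub>G\<^esub>}" using y yc unfolding ent_Image by blast
qed

lemma one_c: "\<one>\<^bsub>G\<^esub> \<in> carrier G" using group.is_monoid[OF grp] monoid.one_closed by blast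

lemma lin12: "lin_ordered_base (ball_structure G \<kappa>) \<longleftrightarrow> lin_ordered_base (bornology (carrier G) (ball_structure G \<kappa>))"
proof
  assume "lin_ordered_base (ball_structure G \<kappa>)"
  then obtain L where L: "L \<subseteq> ball_structure G \<kappa>" "\<forall>A\<in>L. \<forall>B\<in>L. A \<subseteq> B \<or> B \<subseteq> A"
    "\<forall>A\<in>ball_structure G \<kappa>. \<exists>B\<in>L. A \<subseteq> B" by (rule lobE)
  let ?L = "(\<lambda>E. E `` {\<one>\<^bsub>G\<^esub>}) ` L"
  have "?L \<subseteq> bornology (carrier G) (ball_structure G \<kappa>)"
  proof
    fix A assume "A \<in> ?L"
    then obtain E where E: "E \<in> L" "A = E `` {\<one>\<^bsub>G\<^esub>}" by blast
    have "E \<in> ball_structure G \<kappa>" using E(1) L(1) by blast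
    hence "bounded_in (carrier G) (ball_structure G \<kappa>) A" unfolding bounded_in_def using E(2) one_c by blast
    thus "A \<in> bornology (carrier G) (ball_structure G \<kappa>)" unfolding bornology_def by simp
  qed
  moreover have "\<forall>A\<in>?L. \<forall>B\<in>?L. A \<subseteq> B \<or> B \<subseteq> A"
  proof (intro ballI)
    fix A B assume "A \<in> ?L" "B \<in> ?L"
    then obtain E1 E2 where "E1 \<in> L" "E2 \<in> L" "A = E1 `` {\<one>\<^bsub>G\<^esub>}" "B = E2 `` {\<one>\<^bsub>G\<^esub>}" by blast
    moreover have "E1 \<subseteq> E2 \<or> E2 \<subseteq> E1" using L(2) \<open>E1 \<in> L\<close> \<open>E2 \<in> L\<close> by blast
    ultimately show "A \<subseteq> B \<or> B \<subseteq> A" by (elim disjE) (simp_all add: Image_mono)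
  qed
  moreover have "\<forall>A\<in>bornology (carrier G) (ball_structure G \<kappa>). \<exists>B\<in>?L. A \<subseteq> B"
  proof
    fix A assume "A \<in> bornology (carrier G) (ball_structure G \<kappa>)"
    hence A: "A \<subseteq> carrier G" "|A| <o \<kappa>" unfolding bornology_eq by blast+
    then obtain E where E: "E \<in> L" "ent G A \<subseteq> E" using L(3) ent_in by blast
    have "A \<subseteq> E `` {\<one>\<^bsub>G\<^esub>}" using sub_ent_one[OF A(1)] E(2) by blast
    thus "\<exists>B\<in>?L. A \<subseteq> B" using E(1) by blast
  qed
  ultimately show "lin_ordered_base (bornology (carrier G) (ball_structure G \<kappa>))"
    by (rule lobI)
next
  assume "lin_ordered_base (bornology (carrier G) (ball_structure G \<kappa>))"
  then obtain L where L: "L \<subseteq> bornology (carrier G) (ball_structure G \<kappa>)" "\<forall>A\<in>L. \<forall>B\<in>L. A \<subseteq> B \<or> B \<subseteq> A"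
    "\<forall>A\<in>bornology (carrier G) (ball_structure G \<kappa>). \<exists>B\<in>L. A \<subseteq> B" by (rule lobE)
  let ?L = "ent G ` L"
  have "?L \<subseteq> ball_structure G \<kappa>"
  proof
    fix E assume "E \<in> ?L"
    then obtain I where I: "I \<in> L" "E = ent G I" by blast
    hence "I \<subseteq> carrier G" "|I| <o \<kappa>" using L(1) unfolding bornology_eq by blast+
    thus "E \<in> ball_structure G \<kappa>" using ent_in I(2) by simp
  qed
  moreover have "\<forall>A\<in>?L. \<forall>B\<in>?L. A \<subseteq> B \<or> B \<subseteq> A"
  proof (intro ballI)
    fix A B assume "A \<in> ?L" "B \<in> ?L"
    then obtain I J where IJ: "I \<in> L" "J \<in> L" "A = ent G I" "B = ent G J" by blast
    hence "I \<subseteq> J \<or> J \<subseteq> I" using L(2) by blast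
    thus "A \<subseteq> B \<or> B \<subseteq> A" using IJ(3,4) ent_mono by blast
  qed
  moreover have "\<forall>A\<in>ball_structure G \<kappa>. \<exists>B\<in>?L. A \<subseteq> B"
  proof
    fix E assume "E \<in> ball_structure G \<kappa>"
    then obtain I where I: "I \<subseteq> carrier G" "|I| <o \<kappa>" "E = ent G I" using ball_E by blast
    then obtain J where "J \<in> L" "I \<subseteq> J" using L(3) unfolding bornology_eq by blast
    thus "\<exists>B\<in>?L. E \<subseteq> B" using I(3) ent_mono by blast
  qed
  ultimately show "lin_ordered_base (ball_structure G \<kappa>)" by (rule lobI)
qed

lemma reg_bij:
  assumes eq: "|carrier G| =o \<kappa>" and reg: "regularCard \<kappa>"
  shows "\<exists>g. bij_betw g (Field \<kappa>) (carrier G) \<and>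
     (\<forall>S. S \<subseteq> carrier G \<and> |S| <o \<kappa> \<longrightarrow> (\<exists>a\<in>Field \<kappa>. S \<subseteq> g ` under \<kappa> a))"
proof -
  have "|Field \<kappa>| =o |carrier G|"
    using card_of_Field_ordIso[OF co] eq ordIso_symmetric ordIso_transitive by blast
  then obtain g where g: "bij_betw g (Field \<kappa>) (carrier G)" using card_of_ordIso by blast
  have "S \<subseteq> carrier G \<Longrightarrow> |S| <o \<kappa> \<Longrightarrow> \<exists>a\<in>Field \<kappa>. S \<subseteq> g ` under \<kappa> a" for S
  proof -
    assume S: "S \<subseteq> carrier G" "|S| <o \<kappa>"
    define K where "K = inv_into (Field \<kappa>) g ` S"
    have KF: "K \<subseteq> Field \<kappa>" unfolding K_def using S(1) g
      by (metis bij_betw_def image_subsetI inv_into_into subsetD)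
    have "|K| <o \<kappa>" unfolding K_def using small_image S(2) by blast
    hence "\<not> |K| =o \<kappa>" using not_ordLess_ordIso by blast
    hence "\<not> cofinal K \<kappa>" using reg KF unfolding regularCard_def by blast
    then obtain a where a: "a \<in> Field \<kappa>" "\<forall>b\<in>K. \<not>(a \<noteq> b \<and> (a,b) \<in> \<kappa>)" unfolding cofinal_def by blast
    have "K \<subseteq> under \<kappa> a"
    proof
      fix b assume b: "b \<in> K"
      hence "b \<in> Field \<kappa>" using KF by blast
      hence "(b,a) \<in> \<kappa>" using a kTOT[of a b] wo_rel.REFL[OF wor] b
        by (metis refl_onD)
      thus "b \<in> under \<kappa> a" unfolding under_def by blast
    qed
    moreover have "S \<subseteq> g ` K" unfolding K_def using S(1) g
      by (simp add: bij_betw_def image_image subset_iff f_inv_into_f)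
    ultimately show ?thesis using a(1) by blast
  qed
  thus ?thesis using g by blast
qed

lemma reg_lin:
  assumes eq: "|carrier G| =o \<kappa>" and reg: "regularCard \<kappa>"
  shows "lin_ordered_base (bornology (carrier G) (ball_structure G \<kappa>))"
proof -
  obtain g where g: "bij_betw g (Field \<kappa>) (carrier G)"
    and cof: "\<forall>S. S \<subseteq> carrier G \<and> |S| <o \<kappa> \<longrightarrow> (\<exists>a\<in>Field \<kappa>. S \<subseteq> g ` under \<kappa> a)"
    using reg_bij[OF eq reg] by (elim exE conjE) (rule that, assumption+)
  let ?L = "(\<lambda>a. g ` under \<kappa> a) ` Field \<kappa>"
  have "?L \<subseteq> bornology (carrier G) (ball_structure G \<kappa>)"
  proof
    fix B assume "B \<in> ?L"
    then obtain a where a: "a \<in> Field \<kappa>" "B = g ` under \<kappa> a" by blast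
    have "B \<subseteq> carrier G" using a g under_Field[of \<kappa> a] unfolding bij_betw_def by blast
    moreover have "|under \<kappa> a| <o \<kappa>" by (rule under_small[OF a(1)])
    hence "|B| <o \<kappa>" unfolding a(2) by (rule small_image)
    ultimately show "B \<in> bornology (carrier G) (ball_structure G \<kappa>)" unfolding bornology_eq by blast
  qed
  moreover have "\<forall>A\<in>?L. \<forall>B\<in>?L. A \<subseteq> B \<or> B \<subseteq> A"
  proof (intro ballI)
    fix A B assume "A \<in> ?L" "B \<in> ?L"
    then obtain a b where ab: "a \<in> Field \<kappa>" "b \<in> Field \<kappa>" "A = g ` under \<kappa> a" "B = g ` under \<kappa> b" by blast
    from under_chain[OF ab(1,2)] show "A \<subseteq> B \<or> B \<subseteq> A" unfolding ab(3,4) by (elim disjE) (simp_all add: image_mono)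
  qed
  moreover have "\<forall>A\<in>bornology (carrier G) (ball_structure G \<kappa>). \<exists>B\<in>?L. A \<subseteq> B"
  proof
    fix A assume "A \<in> bornology (carrier G) (ball_structure G \<kappa>)"
    hence "A \<subseteq> carrier G \<and> |A| <o \<kappa>" unfolding bornology_eq by simp
    then obtain a where a: "a \<in> Field \<kappa>" "A \<subseteq> g ` under \<kappa> a" using cof by blast
    show "\<exists>B\<in>?L. A \<subseteq> B" by (rule bexI[of _ "g ` under \<kappa> a"]) (use a in auto)
  qed
  ultimately show ?thesis by (rule lobI)
qed

end

context bsetup
begin

lemma ent_Image_mono: "I \<subseteq> J \<Longrightarrow> ent G I `` A \<subseteq> ent G J `` A"
proof -
  assume "I \<subseteq> J"
  hence "ent G I \<subseteq> ent G J" by (rule ent_mono)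
  thus ?thesis by (rule Image_mono) simp
qed

lemma ent_img_small:
  assumes J: "|J| <o \<kappa>" and B: "|B| <o \<kappa>"
  shows "|ent G J `` B| <o \<kappa>"
proof -
  have "ent G J `` B \<subseteq> B \<union> (\<lambda>p. fst p \<otimes> snd p) ` (J \<times> B)"
  proof
    fix y assume "y \<in> ent G J `` B"
    hence "y \<in> carrier G \<and> (\<exists>x\<in>B. x \<in> carrier G \<and> (y = x \<or> (\<exists>i\<in>J. y = i \<otimes> x)))"
      by (simp only: ent_Image)
    then obtain x where x: "x \<in> B" "y = x \<or> (\<exists>i\<in>J. y = i \<otimes> x)" by blast
    show "y \<in> B \<union> (\<lambda>p. fst p \<otimes> snd p) ` (J \<times> B)"
    proof (cases "y = x")
      case True thus ?thesis using x(1) by simp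
    next
      case False
      then obtain i where "i \<in> J" "y = i \<otimes> x" using x(2) by blast
      hence "y = (\<lambda>p. fst p \<otimes> snd p) (i, x)" "(i,x) \<in> J \<times> B" using x(1) by simp_all
      thus ?thesis by blast
    qed
  qed
  moreover have "|B \<union> (\<lambda>p. fst p \<otimes> snd p) ` (J \<times> B)| <o \<kappa>"
    by (rule small_Un[OF B small_image[OF small_times[OF J B]]])
  ultimately show ?thesis by (rule small_mono)
qed

lemma bnd_small: "bounded_in (carrier G) (ball_structure G \<kappa>) B \<Longrightarrow> |B| <o \<kappa>"
  using bounded_iff by simp

lemma small_bnd: "B \<subseteq> carrier G \<Longrightarrow> |B| <o \<kappa> \<Longrightarrow> bounded_in (carrier G) (ball_structure G \<kappa>) B"
  using bounded_iff by simp

lemma lin_normal: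
  assumes lin: "lin_ordered_base (bornology (carrier G) (ball_structure G \<kappa>))"
  shows "normal_ballean (carrier G) (ball_structure G \<kappa>)"
proof -
  obtain L where L: "L \<subseteq> bornology (carrier G) (ball_structure G \<kappa>)" "\<forall>A\<in>L. \<forall>B\<in>L. A \<subseteq> B \<or> B \<subseteq> A"
    "\<forall>A\<in>bornology (carrier G) (ball_structure G \<kappa>). \<exists>B\<in>L. A \<subseteq> B" using lin by (rule lobE)
  have Lsm: "F \<in> L \<Longrightarrow> F \<subseteq> carrier G \<and> |F| <o \<kappa>" for F using L(1) unfolding bornology_eq by blast
  have cof: "I \<subseteq> carrier G \<Longrightarrow> |I| <o \<kappa> \<Longrightarrow> \<exists>F\<in>L. I \<subseteq> F" for I
    using L(3) unfolding bornology_eq by simp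
  show ?thesis unfolding normal_ballean_def
  proof (intro allI impI)
    fix A B assume A: "A \<subseteq> carrier G" and B: "B \<subseteq> carrier G"
      and ad: "asymp_disjoint (carrier G) (ball_structure G \<kappa>) A B"
    define U where "U = {x \<in> carrier G. \<forall>F\<in>L. x \<in> ent G F `` B \<longrightarrow> x \<in> ent G F `` A}"
    define V where "V = carrier G - U"
    have key: "bounded_in (carrier G) (ball_structure G \<kappa>) (ent G F `` A \<inter> ent G F `` B)" if "F \<in> L" for F
    proof -
      have "ent G F \<in> ball_structure G \<kappa>" using Lsm[OF that] ent_in by blast
      thus ?thesis using ad unfolding asymp_disjoint_def by blast
    qed
    have nA: "asymp_nbhd (carrier G) (ball_structure G \<kappa>) U A"
      unfolding asymp_nbhd_def
    proof
      fix E assume "E \<in> ball_structure G \<kappa>"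
      then obtain I where I: "I \<subseteq> carrier G" "|I| <o \<kappa>" "E = ent G I" using ball_E by blast
      obtain F where F: "F \<in> L" "I \<subseteq> F" using cof[OF I(1,2)] by blast
      have "E `` A - U \<subseteq> ent G F `` A \<inter> ent G F `` B"
      proof
        fix x assume x: "x \<in> E `` A - U"
        hence xA: "x \<in> ent G F `` A" using I(3) ent_Image_mono[OF F(2)] by blast
        have xc: "x \<in> carrier G" using x I(3) ent_sub by blast
        then obtain F1 where F1: "F1 \<in> L" "x \<in> ent G F1 `` B" "x \<notin> ent G F1 `` A"
          using x unfolding U_def by blast
        have "F \<subseteq> F1 \<or> F1 \<subseteq> F" using L(2) F(1) F1(1) by blast
        moreover have "\<not> F \<subseteq> F1" using ent_Image_mono[of F F1 A] xA F1(3) by blast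
        ultimately have "F1 \<subseteq> F" by blast
        hence "x \<in> ent G F `` B" using F1(2) ent_Image_mono[of F1 F B] by blast
        thus "x \<in> ent G F `` A \<inter> ent G F `` B" using xA by blast
      qed
      thus "bounded_in (carrier G) (ball_structure G \<kappa>) (E `` A - U)" using key[OF F(1)] bnd_sub by blast
    qed
    have nB: "asymp_nbhd (carrier G) (ball_structure G \<kappa>) V B"
      unfolding asymp_nbhd_def
    proof
      fix E assume "E \<in> ball_structure G \<kappa>"
      then obtain I where I: "I \<subseteq> carrier G" "|I| <o \<kappa>" "E = ent G I" using ball_E by blast
      obtain F where F: "F \<in> L" "I \<subseteq> F" using cof[OF I(1,2)] by blast
      have "E `` B - V \<subseteq> ent G F `` A \<inter> ent G F `` B"
      proof
        fix x assume x: "x \<in> E `` B - V"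
        hence xB: "x \<in> ent G F `` B" using I(3) ent_Image_mono[OF F(2)] by blast
        have xc: "x \<in> carrier G" using x I(3) ent_sub by blast
        hence "x \<in> U" using x unfolding V_def by blast
        hence "x \<in> ent G F `` A" using F(1) xB unfolding U_def by blast
        thus "x \<in> ent G F `` A \<inter> ent G F `` B" using xB by blast
      qed
      thus "bounded_in (carrier G) (ball_structure G \<kappa>) (E `` B - V)" using key[OF F(1)] bnd_sub by blast
    qed
    have "U \<subseteq> carrier G" "V \<subseteq> carrier G" "U \<inter> V = {}" unfolding U_def V_def by blast+
    thus "\<exists>U V. U \<subseteq> carrier G \<and> V \<subseteq> carrier G \<and> asymp_nbhd (carrier G) (ball_structure G \<kappa>) U A
         \<and> asymp_nbhd (carrier G) (ball_structure G \<kappa>) V B \<and> U \<inter> V = {}" using nA nB by blast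
  qed
qed

end

context bsetup
begin

lemma reg_growth:
  assumes eq: "|carrier G| =o \<kappa>" and reg: "regularCard \<kappa>"
  shows "bounded_growth (carrier G) (ball_structure G \<kappa>)"
proof -
  obtain g where g: "bij_betw g (Field \<kappa>) (carrier G)"
    and cof: "\<forall>S. S \<subseteq> carrier G \<and> |S| <o \<kappa> \<longrightarrow> (\<exists>a\<in>Field \<kappa>. S \<subseteq> g ` under \<kappa> a)"
    using reg_bij[OF eq reg] by (elim exE conjE) (rule that, assumption+)
  define M where "M x = g ` under \<kappa> (inv_into (Field \<kappa>) g x)" for x
  define \<Gamma> where "\<Gamma> = {p. p \<in> ent G (M (fst p))}"
  have \<Gamma>x: "\<Gamma> `` {x} = ent G (M x) `` {x}" for x unfolding \<Gamma>_def by auto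
  have \<Gamma>sub: "\<Gamma> \<subseteq> carrier G \<times> carrier G" unfolding \<Gamma>_def using ent_sub by auto
  have inv1: "x \<in> carrier G \<Longrightarrow> inv_into (Field \<kappa>) g x \<in> Field \<kappa> \<and> g (inv_into (Field \<kappa>) g x) = x" for x
    using g by (metis bij_betw_def bij_betw_inv_into_left bij_betw_inv_into_right inv_into_into)
  have inv2: "b \<in> Field \<kappa> \<Longrightarrow> inv_into (Field \<kappa>) g (g b) = b" for b
    using g by (simp add: bij_betw_def)
  have gu: "a \<in> Field \<kappa> \<Longrightarrow> g ` under \<kappa> a \<subseteq> carrier G" for a
    using g under_Field[of \<kappa> a] unfolding bij_betw_def by blast
  have gus: "a \<in> Field \<kappa> \<Longrightarrow> |g ` under \<kappa> a| <o \<kappa>" for a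
    using under_small small_image by blast
  have undtr: "(b,a) \<in> \<kappa> \<Longrightarrow> under \<kappa> b \<subseteq> under \<kappa> a" for a b
    unfolding under_def using kTRANS by blast
  have P1: "\<forall>B. bounded_in (carrier G) (ball_structure G \<kappa>) B \<longrightarrow> bounded_in (carrier G) (ball_structure G \<kappa>) (\<Gamma> `` B)"
  proof (intro allI impI)
    fix B assume "bounded_in (carrier G) (ball_structure G \<kappa>) B"
    hence B: "B \<subseteq> carrier G" "|B| <o \<kappa>" using bounded_iff by simp_all
    then obtain a where a: "a \<in> Field \<kappa>" "B \<subseteq> g ` under \<kappa> a" using cof by blast
    have "\<Gamma> `` B \<subseteq> ent G (g ` under \<kappa> a) `` B"
    proof
      fix y assume "y \<in> \<Gamma> `` B"
      then obtain x where x: "x \<in> B" "(x,y) \<in> \<Gamma>" by blast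
      hence xy: "(x,y) \<in> ent G (M x)" unfolding \<Gamma>_def by simp
      obtain b where b: "b \<in> under \<kappa> a" "x = g b" using a(2) x(1) by blast
      have bF: "b \<in> Field \<kappa>" using b(1) under_Field by fastforce
      have "M x = g ` under \<kappa> b" unfolding M_def b(2) inv2[OF bF] ..
      also have "\<dots> \<subseteq> g ` under \<kappa> a" using undtr b(1) unfolding under_def by blast
      finally have "(x,y) \<in> ent G (g ` under \<kappa> a)" using xy ent_mono by blast
      thus "y \<in> ent G (g ` under \<kappa> a) `` B" using x(1) by blast
    qed
    moreover have "|ent G (g ` under \<kappa> a) `` B| <o \<kappa>" by (rule ent_img_small[OF gus[OF a(1)] B(2)])
    moreover have "\<Gamma> `` B \<subseteq> carrier G" using \<Gamma>sub by blast
    ultimately show "bounded_in (carrier G) (ball_structure G \<kappa>) (\<Gamma> `` B)"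
      using small_mono small_bnd by blast
  qed
  have P2: "\<forall>E\<in>ball_structure G \<kappa>. \<exists>B. bounded_in (carrier G) (ball_structure G \<kappa>) B \<and>
      (\<forall>x\<in>carrier G - B. E `` {x} \<subseteq> \<Gamma> `` {x})"
  proof
    fix E assume "E \<in> ball_structure G \<kappa>"
    then obtain I where I: "I \<subseteq> carrier G" "|I| <o \<kappa>" "E = ent G I" using ball_E by blast
    then obtain a0 where a0: "a0 \<in> Field \<kappa>" "I \<subseteq> g ` under \<kappa> a0" using cof by blast
    have "bounded_in (carrier G) (ball_structure G \<kappa>) (g ` under \<kappa> a0)"
      using small_bnd[OF gu[OF a0(1)] gus[OF a0(1)]] .
    moreover have "\<forall>x\<in>carrier G - g ` under \<kappa> a0. E `` {x} \<subseteq> \<Gamma> `` {x}"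
    proof
      fix x assume x: "x \<in> carrier G - g ` under \<kappa> a0"
      define b where "b = inv_into (Field \<kappa>) g x"
      have b: "b \<in> Field \<kappa>" "g b = x" using inv1 x unfolding b_def by blast+
      have "b \<notin> under \<kappa> a0" using x b(2) by blast
      hence "(a0,b) \<in> \<kappa>" using kTOT[OF a0(1) b(1)] unfolding under_def by blast
      hence "g ` under \<kappa> a0 \<subseteq> g ` under \<kappa> b" using undtr by blast
      hence "I \<subseteq> M x" unfolding M_def b_def[symmetric] using a0(2) by blast
      hence "ent G I `` {x} \<subseteq> ent G (M x) `` {x}" by (rule ent_Image_mono)
      thus "E `` {x} \<subseteq> \<Gamma> `` {x}" unfolding I(3) \<Gamma>x .
    qed
    ultimately show "\<exists>B. bounded_in (carrier G) (ball_structure G \<kappa>) B \<and>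
      (\<forall>x\<in>carrier G - B. E `` {x} \<subseteq> \<Gamma> `` {x})" by blast
  qed
  show ?thesis unfolding bounded_growth_def using \<Gamma>sub P1 P2 by blast
qed

end

context bsetup
begin

lemma exists_R0: "\<exists>R0. R0 \<subseteq> carrier G \<and> |R0| =o \<kappa>"
proof -
  have "|Field \<kappa>| \<le>o |carrier G|" using card_of_Field_ordIso[OF co] kle ordIso_ordLeq_trans by blast
  then obtain h where h: "inj_on h (Field \<kappa>)" "h ` Field \<kappa> \<subseteq> carrier G"
    unfolding card_of_ordLeq[symmetric] by blast
  have "|h ` Field \<kappa>| =o |Field \<kappa>|" using h(1) card_of_ordIso inj_on_imp_bij_betw ordIso_symmetric by blast
  hence "|h ` Field \<kappa>| =o \<kappa>" using card_of_Field_ordIso[OF co] ordIso_transitive by blast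
  thus ?thesis using h(2) by blast
qed

lemma growth_obtain:
  assumes "bounded_growth (carrier G) (ball_structure G \<kappa>)"
  obtains \<Gamma> bd where "\<Gamma> \<subseteq> carrier G \<times> carrier G"
    "\<And>B. B \<subseteq> carrier G \<Longrightarrow> |B| <o \<kappa> \<Longrightarrow> |\<Gamma> `` B| <o \<kappa>"
    "\<And>I. I \<subseteq> carrier G \<Longrightarrow> |I| <o \<kappa> \<Longrightarrow> bd I \<subseteq> carrier G \<and> |bd I| <o \<kappa> \<and>
        (\<forall>x\<in>carrier G - bd I. ent G I `` {x} \<subseteq> \<Gamma> `` {x})"
proof -
  obtain \<Gamma> where G1: "\<Gamma> \<subseteq> carrier G \<times> carrier G"
    and G2: "\<forall>B. bounded_in (carrier G) (ball_structure G \<kappa>) B \<longrightarrow> bounded_in (carrier G) (ball_structure G \<kappa>) (\<Gamma> `` B)"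
    and G3: "\<forall>E\<in>ball_structure G \<kappa>. \<exists>B. bounded_in (carrier G) (ball_structure G \<kappa>) B \<and>
        (\<forall>x\<in>carrier G - B. E `` {x} \<subseteq> \<Gamma> `` {x})"
    using assms unfolding bounded_growth_def by (elim exE conjE) (rule that, assumption+)
  have "\<forall>I\<in>{I. I \<subseteq> carrier G \<and> |I| <o \<kappa>}. \<exists>B. bounded_in (carrier G) (ball_structure G \<kappa>) B \<and>
        (\<forall>x\<in>carrier G - B. ent G I `` {x} \<subseteq> \<Gamma> `` {x})"
    using G3 ent_in by blast
  hence "\<exists>bd. \<forall>I\<in>{I. I \<subseteq> carrier G \<and> |I| <o \<kappa>}. bounded_in (carrier G) (ball_structure G \<kappa>) (bd I) \<and>
        (\<forall>x\<in>carrier G - bd I. ent G I `` {x} \<subseteq> \<Gamma> `` {x})" by (rule bchoice)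
  then obtain bd where bd: "\<forall>I\<in>{I. I \<subseteq> carrier G \<and> |I| <o \<kappa>}. bounded_in (carrier G) (ball_structure G \<kappa>) (bd I) \<and>
        (\<forall>x\<in>carrier G - bd I. ent G I `` {x} \<subseteq> \<Gamma> `` {x})" 
    by (elim exE) (rule that, assumption+)
  show ?thesis
  proof (rule that[of \<Gamma> bd])
    show "\<Gamma> \<subseteq> carrier G \<times> carrier G" by (rule G1)
    show "|\<Gamma> `` B| <o \<kappa>" if "B \<subseteq> carrier G" "|B| <o \<kappa>" for B
      using G2 small_bnd[OF that] bnd_small by blast
    show "bd I \<subseteq> carrier G \<and> |bd I| <o \<kappa> \<and> (\<forall>x\<in>carrier G - bd I. ent G I `` {x} \<subseteq> \<Gamma> `` {x})"
      if "I \<subseteq> carrier G" "|I| <o \<kappa>" for I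
    proof -
      have "bounded_in (carrier G) (ball_structure G \<kappa>) (bd I) \<and> (\<forall>x\<in>carrier G - bd I. ent G I `` {x} \<subseteq> \<Gamma> `` {x})"
        using bd that by blast
      thus ?thesis using bounded_iff by simp
    qed
  qed
qed

lemma mult_in_ent: "i \<in> I \<Longrightarrow> I \<subseteq> carrier G \<Longrightarrow> x \<in> carrier G \<Longrightarrow> i \<otimes> x \<in> ent G I `` {x}"
  unfolding ent_Image by auto

lemma growth_le:
  assumes bg: "bounded_growth (carrier G) (ball_structure G \<kappa>)"
  shows "\<not> \<kappa> <o |carrier G|"
proof
  assume lt: "\<kappa> <o |carrier G|"
  obtain \<Gamma> bd where G1: "\<Gamma> \<subseteq> carrier G \<times> carrier G"
    and G2: "\<And>B. B \<subseteq> carrier G \<Longrightarrow> |B| <o \<kappa> \<Longrightarrow> |\<Gamma> `` B| <o \<kappa>"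
    and G3: "\<And>I. I \<subseteq> carrier G \<Longrightarrow> |I| <o \<kappa> \<Longrightarrow> bd I \<subseteq> carrier G \<and> |bd I| <o \<kappa> \<and>
        (\<forall>x\<in>carrier G - bd I. ent G I `` {x} \<subseteq> \<Gamma> `` {x})"
    by (rule growth_obtain[OF bg]) (rule that, assumption+)
  obtain R0 where R0: "R0 \<subseteq> carrier G" "|R0| =o \<kappa>" using exists_R0 by blast
  have sg: "g \<in> R0 \<Longrightarrow> {g} \<subseteq> carrier G \<and> |{g}| <o \<kappa>" for g using R0(1) fin_small[of "{g}"] by auto
  define U0 where "U0 = (\<Union>g\<in>R0. bd {g})"
  have "|U0| \<le>o \<kappa>" unfolding U0_def
  proof (rule card_of_UNION_ordLeq_infinite_Field[OF inf co])
    show "|R0| \<le>o \<kappa>" by (rule ordIso_imp_ordLeq[OF R0(2)])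
    show "\<forall>i\<in>R0. |bd {i}| \<le>o \<kappa>"
    proof
      fix i assume "i \<in> R0"
      hence "|bd {i}| <o \<kappa>" using G3 sg by simp
      thus "|bd {i}| \<le>o \<kappa>" by (rule ordLess_imp_ordLeq)
    qed
  qed
  have "\<not> carrier G \<subseteq> U0"
  proof
    assume "carrier G \<subseteq> U0"
    hence "|carrier G| \<le>o |U0|" by (rule card_of_mono1)
    hence "|carrier G| \<le>o \<kappa>" using \<open>|U0| \<le>o \<kappa>\<close> by (rule ordLeq_transitive)
    thus False using not_ordLess_ordLeq[OF lt] by blast
  qed
  then obtain x where x: "x \<in> carrier G" "x \<notin> U0" by blast
  have img: "(\<lambda>g. g \<otimes> x) ` R0 \<subseteq> \<Gamma> `` {x}"
  proof
    fix y assume "y \<in> (\<lambda>g. g \<otimes> x) ` R0"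
    then obtain g where g: "g \<in> R0" "y = g \<otimes> x" by blast
    have "x \<notin> bd {g}" using x(2) g(1) unfolding U0_def by blast
    moreover have "\<forall>z\<in>carrier G - bd {g}. ent G {g} `` {z} \<subseteq> \<Gamma> `` {z}" using G3[of "{g}"] sg[OF g(1)] by simp
    ultimately have "ent G {g} `` {x} \<subseteq> \<Gamma> `` {x}" using x(1) by blast
    moreover have "g \<otimes> x \<in> ent G {g} `` {x}" using mult_in_ent[of g "{g}" x] sg[OF g(1)] x(1) by simp
    ultimately show "y \<in> \<Gamma> `` {x}" using g(2) by blast
  qed
  have inj: "inj_on (\<lambda>g. g \<otimes> x) R0"
  proof (rule inj_onI)
    fix g h assume "g \<in> R0" "h \<in> R0" "g \<otimes> x = h \<otimes> x"
    thus "g = h" using rcan[of g h x] R0(1) x(1) by blast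
  qed
  have "|\<Gamma> `` {x}| <o \<kappa>" using G2[of "{x}"] x(1) fin_small[of "{x}"] by simp
  hence "|R0| <o \<kappa>" by (rule small_inj[OF inj img])
  thus False using not_ordLess_ordIso R0(2) by blast
qed

lemma growth_reg:
  assumes bg: "bounded_growth (carrier G) (ball_structure G \<kappa>)" and eq: "|carrier G| =o \<kappa>"
  shows "regularCard \<kappa>"
proof (rule ccontr)
  assume nreg: "\<not> regularCard \<kappa>"
  obtain \<Gamma> bd where G1: "\<Gamma> \<subseteq> carrier G \<times> carrier G"
    and G2: "\<And>B. B \<subseteq> carrier G \<Longrightarrow> |B| <o \<kappa> \<Longrightarrow> |\<Gamma> `` B| <o \<kappa>"
    and G3: "\<And>I. I \<subseteq> carrier G \<Longrightarrow> |I| <o \<kappa> \<Longrightarrow> bd I \<subseteq> carrier G \<and> |bd I| <o \<kappa> \<and>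
        (\<forall>x\<in>carrier G - bd I. ent G I `` {x} \<subseteq> \<Gamma> `` {x})"
    by (rule growth_obtain[OF bg]) (rule that, assumption+)
  have "\<exists>K. K \<subseteq> Field \<kappa> \<and> cofinal K \<kappa> \<and> \<not> |K| =o \<kappa>"
    using nreg unfolding regularCard_def by simp
  then obtain K where K: "K \<subseteq> Field \<kappa>" "cofinal K \<kappa>" "\<not> |K| =o \<kappa>"
    by (elim exE conjE) (rule that, assumption+)
  have "|K| \<le>o \<kappa>" by (rule ordLeq_ordIso_trans[OF card_of_mono1[OF K(1)] card_of_Field_ordIso[OF co]])
  hence Ks: "|K| <o \<kappa>" using K(3) ordLeq_iff_ordLess_or_ordIso[of "|K|" \<kappa>] by blast
  have "|Field \<kappa>| =o |carrier G|"
    using card_of_Field_ordIso[OF co] eq ordIso_symmetric ordIso_transitive by blast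
  then obtain g where g: "bij_betw g (Field \<kappa>) (carrier G)" using card_of_ordIso by blast
  define I where "I a = g ` under \<kappa> a" for a
  have Ia: "a \<in> Field \<kappa> \<Longrightarrow> I a \<subseteq> carrier G \<and> |I a| <o \<kappa>" for a
  proof
    assume a: "a \<in> Field \<kappa>"
    have "g ` Field \<kappa> = carrier G" using g by (simp add: bij_betw_def)
    thus "I a \<subseteq> carrier G" unfolding I_def using under_Field[of \<kappa> a] by blast
    show "|I a| <o \<kappa>" unfolding I_def by (rule small_image[OF under_small[OF a]])
  qed
  have ne: "a \<in> K \<Longrightarrow> carrier G - bd (I a) \<noteq> {}" for a
  proof
    assume a: "a \<in> K" and e: "carrier G - bd (I a) = {}"
    have aF: "a \<in> Field \<kappa>" using a K(1) by blast
    have "|bd (I a)| <o \<kappa>" using G3[of "I a"] Ia[OF aF] by simp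
    moreover have "carrier G \<subseteq> bd (I a)" using e by blast
    ultimately have "|carrier G| <o \<kappa>" using small_mono[of "carrier G" "bd (I a)"] by blast
    thus False using eq not_ordLess_ordIso by blast
  qed
  define y where "y a = (SOME z. z \<in> carrier G - bd (I a))" for a
  have y: "a \<in> K \<Longrightarrow> y a \<in> carrier G - bd (I a)" for a
    unfolding y_def using ne by (meson ex_in_conv someI_ex)
  define T where "T = \<Gamma> `` (y ` K)"
  have "y ` K \<subseteq> carrier G" using y by blast
  hence Ts: "|T| <o \<kappa>" unfolding T_def by (rule G2[OF _ small_image[OF Ks]])
  have IT: "|I a| \<le>o |T|" if a: "a \<in> K" for a
  proof -
    have aF: "a \<in> Field \<kappa>" using a K(1) by blast
    have "inj_on (\<lambda>i. i \<otimes> y a) (I a)"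
    proof (rule inj_onI)
      fix i j assume "i \<in> I a" "j \<in> I a" "i \<otimes> y a = j \<otimes> y a"
      thus "i = j" using rcan[of i j "y a"] Ia[OF aF] y[OF a] by blast
    qed
    moreover have "(\<lambda>i. i \<otimes> y a) ` I a \<subseteq> T"
    proof
      fix z assume "z \<in> (\<lambda>i. i \<otimes> y a) ` I a"
      then obtain i where i: "i \<in> I a" "z = i \<otimes> y a" by blast
      have "z \<in> ent G (I a) `` {y a}" using mult_in_ent[OF i(1)] Ia[OF aF] y[OF a] i(2) by simp
      moreover have "\<forall>x\<in>carrier G - bd (I a). ent G (I a) `` {x} \<subseteq> \<Gamma> `` {x}" using G3[of "I a"] Ia[OF aF] by simp
      hence "ent G (I a) `` {y a} \<subseteq> \<Gamma> `` {y a}" using y[OF a] by blast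
      moreover have "\<Gamma> `` {y a} \<subseteq> T" unfolding T_def using a by blast
      ultimately show "z \<in> T" by blast
    qed
    ultimately show ?thesis unfolding card_of_ordLeq[symmetric] by blast
  qed
  have cov: "carrier G \<subseteq> (\<Union>a\<in>K. I a)"
  proof
    fix x assume x: "x \<in> carrier G"
    define b where "b = inv_into (Field \<kappa>) g x"
    have b: "b \<in> Field \<kappa>" "g b = x" using g x unfolding b_def
      by (metis bij_betw_def bij_betw_inv_into_right inv_into_into)+
    obtain a where a: "a \<in> K" "b \<noteq> a" "(b,a) \<in> \<kappa>" using K(2) b(1) unfolding cofinal_def by blast
    hence "x \<in> I a" unfolding I_def under_def using b(2) by blast
    thus "x \<in> (\<Union>a\<in>K. I a)" using a(1) by blast
  qed
  have "|\<Union>a\<in>K. I a| \<le>o |SIGMA a:K. I a|" by (rule card_of_UNION_Sigma)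
  also have "|SIGMA a:K. I a| \<le>o |K \<times> T|" using card_of_Sigma_mono1[of K I "\<lambda>_. T"] IT by simp
  finally have "|\<Union>a\<in>K. I a| <o \<kappa>" using small_times[OF Ks Ts] by (rule ordLeq_ordLess_trans)
  hence "|carrier G| <o \<kappa>" by (rule small_mono[OF cov])
  thus False using eq not_ordLess_ordIso by blast
qed

end

context bsetup
begin

lemma Xco: "Card_order |carrier G|" by (rule card_of_Card_order)
lemma Xinf: "\<not> finite (Field |carrier G| )" using carrier_inf by (simp add: Field_card_of)

lemma Xs_times: "|A| <o |carrier G| \<Longrightarrow> |B| <o |carrier G| \<Longrightarrow> |A \<times> B| <o |carrier G|"
  by (rule small_times_gen[OF Xco Xinf])
lemma Xs_image: "|A| <o |carrier G| \<Longrightarrow> |f ` A| <o |carrier G|"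
  using card_of_image ordLeq_ordLess_trans by blast
lemma Xs_mono: "A \<subseteq> B \<Longrightarrow> |B| <o |carrier G| \<Longrightarrow> |A| <o |carrier G|"
  using card_of_mono1 ordLeq_ordLess_trans by blast
lemma Xs_Un: "|A| <o |carrier G| \<Longrightarrow> |B| <o |carrier G| \<Longrightarrow> |A \<union> B| <o |carrier G|"
  by (rule card_of_Un_ordLess_infinite[OF carrier_inf])
lemma Xs_inj: "inj_on f A \<Longrightarrow> f ` A \<subseteq> B \<Longrightarrow> |B| <o |carrier G| \<Longrightarrow> |A| <o |carrier G|"
proof -
  assume "inj_on f A" "f ` A \<subseteq> B" "|B| <o |carrier G|"
  hence "|A| \<le>o |B|" unfolding card_of_ordLeq[symmetric] by blast
  thus ?thesis using \<open>|B| <o |carrier G|\<close> ordLeq_ordLess_trans by blast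
qed
lemma Xs_ne: "|F| <o |carrier G| \<Longrightarrow> carrier G - F \<noteq> {}"
proof
  assume "|F| <o |carrier G|" "carrier G - F = {}"
  hence "|carrier G| <o |carrier G|" using Xs_mono[of "carrier G" F] by blast
  thus False using ordLess_irreflexive by blast
qed

lemma ord_inj:
  assumes inj: "inj_on \<iota> D" and img: "\<iota> ` D \<subseteq> carrier G"
    and R: "R = {(u,v). u \<in> D \<and> v \<in> D \<and> (\<iota> u, \<iota> v) \<in> |carrier G| \<and> \<iota> u \<noteq> \<iota> v}"
  shows "wf R" and "v \<in> D \<Longrightarrow> |{u. (u,v) \<in> R}| <o |carrier G|"
    and "u \<in> D \<Longrightarrow> v \<in> D \<Longrightarrow> u \<noteq> v \<Longrightarrow> (u,v) \<in> R \<or> (v,u) \<in> R"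
    and "(u,v) \<in> R \<Longrightarrow> (v,w) \<in> R \<Longrightarrow> (u,w) \<in> R"
    and "(u,v) \<in> R \<Longrightarrow> u \<in> D \<and> v \<in> D" and "(v,v) \<notin> R"
proof -
  have wo: "Well_order |carrier G|" by (rule card_of_Well_order)
  have wr: "wo_rel |carrier G|" unfolding wo_rel_def by (rule wo)
  have "wf ( |carrier G| - Id)" using wo unfolding well_order_on_def by blast
  hence "wf (inv_image ( |carrier G| - Id) \<iota>)" by (rule wf_inv_image)
  moreover have "R \<subseteq> inv_image ( |carrier G| - Id) \<iota>" unfolding R inv_image_def by auto
  ultimately show "wf R" by (rule wf_subset)
  show "v \<in> D \<Longrightarrow> |{u. (u,v) \<in> R}| <o |carrier G|"
  proof -
    assume v: "v \<in> D"
    have "inj_on \<iota> {u. (u,v) \<in> R}" using inj unfolding R by (rule inj_on_subset) blast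
    moreover have "\<iota> ` {u. (u,v) \<in> R} \<subseteq> underS |carrier G| (\<iota> v)" unfolding R underS_def by auto
    moreover have "|underS |carrier G| (\<iota> v)| <o |carrier G|"
      using card_of_underS[OF Xco] v img by (simp add: Field_card_of image_subset_iff)
    ultimately show ?thesis by (rule Xs_inj)
  qed
  show "u \<in> D \<Longrightarrow> v \<in> D \<Longrightarrow> u \<noteq> v \<Longrightarrow> (u,v) \<in> R \<or> (v,u) \<in> R"
  proof -
    assume uv: "u \<in> D" "v \<in> D" "u \<noteq> v"
    hence ne: "\<iota> u \<noteq> \<iota> v" using inj unfolding inj_on_def by blast
    have "\<iota> u \<in> Field |carrier G|" "\<iota> v \<in> Field |carrier G|" using uv img by (auto simp: Field_card_of)
    hence "(\<iota> u, \<iota> v) \<in> |carrier G| \<or> (\<iota> v, \<iota> u) \<in> |carrier G|" using wo_rel.TOTALS[OF wr] by blast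
    thus ?thesis unfolding R using uv ne by auto
  qed
  show "(u,v) \<in> R \<Longrightarrow> (v,w) \<in> R \<Longrightarrow> (u,w) \<in> R"
  proof -
    assume a: "(u,v) \<in> R" "(v,w) \<in> R"
    have t: "(\<iota> u, \<iota> w) \<in> |carrier G|" using a wo_rel.TRANS[OF wr] unfolding R trans_def by blast
    have "\<iota> u \<noteq> \<iota> w"
    proof
      assume e: "\<iota> u = \<iota> w"
      have "(\<iota> u, \<iota> v) \<in> |carrier G|" "(\<iota> v, \<iota> u) \<in> |carrier G|" using a e unfolding R by auto
      hence "\<iota> u = \<iota> v" using wo_rel.ANTISYM[OF wr] unfolding antisym_def by blast
      thus False using a(1) unfolding R by auto
    qed
    thus ?thesis using a t unfolding R by auto
  qed
  show "(u,v) \<in> R \<Longrightarrow> u \<in> D \<and> v \<in> D" unfolding R by auto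
  show "(v,v) \<notin> R" unfolding R by auto
qed

lemma ga1: "x \<in> carrier G \<Longrightarrow> y \<in> carrier G \<Longrightarrow> o' \<in> carrier G \<Longrightarrow> inv x \<otimes> y = o' \<Longrightarrow> x = y \<otimes> inv o'"
  by (metis inv_closed inv_inv inv_mult_group inv_solve_left' m_closed r_inv r_one m_assoc)

lemma ga2: "x \<in> carrier G \<Longrightarrow> y \<in> carrier G \<Longrightarrow> o' \<in> carrier G \<Longrightarrow> inv x \<otimes> y = o' \<Longrightarrow> y = x \<otimes> o'"
  using inv_solve_left' by blast

lemma ga3: "x \<in> carrier G \<Longrightarrow> y1 \<in> carrier G \<Longrightarrow> y2 \<in> carrier G \<Longrightarrow> inv x \<otimes> y1 = inv x \<otimes> y2 \<Longrightarrow> y1 = y2"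
proof -
  assume c: "x \<in> carrier G" "y1 \<in> carrier G" "y2 \<in> carrier G" and e: "inv x \<otimes> y1 = inv x \<otimes> y2"
  have "y1 = x \<otimes> (inv x \<otimes> y1)" using c by (simp add: m_assoc[symmetric])
  also have "\<dots> = x \<otimes> (inv x \<otimes> y2)" using e by simp
  also have "\<dots> = y2" using c by (simp add: m_assoc[symmetric])
  finally show ?thesis .
qed

lemma ga4: "x1 \<in> carrier G \<Longrightarrow> x2 \<in> carrier G \<Longrightarrow> y \<in> carrier G \<Longrightarrow> inv x1 \<otimes> y = inv x2 \<otimes> y \<Longrightarrow> x1 = x2"
  by (metis inv_closed inv_inv rcan)

end

context bsetup
begin

lemma phase1: "\<exists>k h. (\<forall>r\<in>carrier G. k r \<in> carrier G) \<and> (\<forall>c\<in>carrier G. h c \<in> carrier G) \<and>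
   inj_on (\<lambda>p. inv (k (snd p)) \<otimes> h (fst p)) (carrier G \<times> carrier G)"
proof -
  define D1 where "D1 = carrier G <+> carrier G"
  have "|D1| =o |carrier G|" unfolding D1_def
    by (rule card_of_Plus_infinite1[OF carrier_inf ordLeq_reflexive[OF card_of_Well_order]])
  hence "|D1| \<le>o |carrier G|" by (rule ordIso_imp_ordLeq)
  then obtain \<iota> where \<iota>: "inj_on \<iota> D1" "\<iota> ` D1 \<subseteq> carrier G" unfolding card_of_ordLeq[symmetric] by blast
  define R1 where "R1 = {(u,v). u \<in> D1 \<and> v \<in> D1 \<and> (\<iota> u, \<iota> v) \<in> |carrier G| \<and> \<iota> u \<noteq> \<iota> v}"
  note O = ord_inj[OF \<iota> R1_def]
  define Sr where "Sr v = {r. (Inl r, v) \<in> R1}" for v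
  define Sc where "Sc v = {c. (Inr c, v) \<in> R1}" for v
  define Old where "Old f v = (\<lambda>(r',c'). inv (f (Inl r')) \<otimes> f (Inr c')) ` (Sr v \<times> Sc v)" for f and v :: "'a + 'a"
  define F where "F f v = (case v of Inl r \<Rightarrow> (\<lambda>r'. f (Inl r')) ` Sr v \<union> (\<lambda>(c,w). f (Inr c) \<otimes> inv w) ` (Sc v \<times> Old f v)
                   | Inr c \<Rightarrow> (\<lambda>c'. f (Inr c')) ` Sc v \<union> (\<lambda>(r',w). f (Inl r') \<otimes> w) ` (Sr v \<times> Old f v))" for f v
  have dep: "F f v = F g v" if eq: "\<And>u. (u,v) \<in> R1 \<Longrightarrow> f u = g u" for f g v
  proof -
    have e1: "r \<in> Sr v \<Longrightarrow> f (Inl r) = g (Inl r)" for r using eq unfolding Sr_def by blast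
    have e2: "c \<in> Sc v \<Longrightarrow> f (Inr c) = g (Inr c)" for c using eq unfolding Sc_def by blast
    have eo: "Old f v = Old g v" unfolding Old_def by (rule image_cong) (auto simp: e1 e2)
    show ?thesis
    proof (cases v)
      case (Inl r)
      have "(\<lambda>r'. f (Inl r')) ` Sr v = (\<lambda>r'. g (Inl r')) ` Sr v" by (rule image_cong) (auto simp: e1)
      moreover have "(\<lambda>(c,w). f (Inr c) \<otimes> inv w) ` (Sc v \<times> Old f v) = (\<lambda>(c,w). g (Inr c) \<otimes> inv w) ` (Sc v \<times> Old g v)"
        unfolding eo by (rule image_cong) (auto simp: e2)
      ultimately show ?thesis unfolding F_def Inl by simp
    next
      case (Inr c)
      have "(\<lambda>c'. f (Inr c')) ` Sc v = (\<lambda>c'. g (Inr c')) ` Sc v" by (rule image_cong) (auto simp: e2)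
      moreover have "(\<lambda>(r',w). f (Inl r') \<otimes> w) ` (Sr v \<times> Old f v) = (\<lambda>(r',w). g (Inl r') \<otimes> w) ` (Sr v \<times> Old g v)"
        unfolding eo by (rule image_cong) (auto simp: e1)
      ultimately show ?thesis unfolding F_def Inr by simp
    qed
  qed
  have Srs: "v \<in> D1 \<Longrightarrow> |Sr v| <o |carrier G|" for v
  proof -
    assume v: "v \<in> D1"
    have "inj_on Inl (Sr v)" by simp
    moreover have "Inl ` Sr v \<subseteq> {u. (u,v) \<in> R1}" unfolding Sr_def by blast
    ultimately show ?thesis using O(2)[OF v] by (rule Xs_inj)
  qed
  have Scs: "v \<in> D1 \<Longrightarrow> |Sc v| <o |carrier G|" for v
  proof -
    assume v: "v \<in> D1"
    have "inj_on Inr (Sc v)" by simp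
    moreover have "Inr ` Sc v \<subseteq> {u. (u,v) \<in> R1}" unfolding Sc_def by blast
    ultimately show ?thesis using O(2)[OF v] by (rule Xs_inj)
  qed
  have Olds: "v \<in> D1 \<Longrightarrow> |Old f v| <o |carrier G|" for f v
    unfolding Old_def by (rule Xs_image[OF Xs_times[OF Srs Scs]])
  have Fs: "v \<in> D1 \<Longrightarrow> |F f v| <o |carrier G|" for f v
  proof (cases v)
    case (Inl r)
    assume v: "v \<in> D1"
    show ?thesis unfolding F_def Inl
      using Xs_Un[OF Xs_image[OF Srs[OF v]] Xs_image[OF Xs_times[OF Scs[OF v] Olds[OF v]]]] Inl by simp
  next
    case (Inr c)
    assume v: "v \<in> D1"
    show ?thesis unfolding F_def Inr
      using Xs_Un[OF Xs_image[OF Scs[OF v]] Xs_image[OF Xs_times[OF Srs[OF v] Olds[OF v]]]] Inr by simp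
  qed
  have "\<exists>f. \<forall>v. v \<in> D1 \<longrightarrow> f v \<in> carrier G \<and> f v \<notin> F f v"
  proof (rule greedy[OF O(1)])
    show "F f v = F g v" if "\<And>u. (u,v) \<in> R1 \<Longrightarrow> f u = g u" for f g v by (rule dep) (rule that)
    show "carrier G - F f v \<noteq> {}" if "v \<in> D1" for f v by (rule Xs_ne[OF Fs[OF that]])
  qed
  then obtain f where f: "\<And>v. v \<in> D1 \<Longrightarrow> f v \<in> carrier G \<and> f v \<notin> F f v" by blast
  define k where "k r = f (Inl r)" for r
  define h where "h c = f (Inr c)" for c
  have inD: "r \<in> carrier G \<Longrightarrow> Inl r \<in> D1" "c \<in> carrier G \<Longrightarrow> Inr c \<in> D1" for r c unfolding D1_def by auto
  have kc: "r \<in> carrier G \<Longrightarrow> k r \<in> carrier G" for r unfolding k_def using f inD by blast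
  have hc: "c \<in> carrier G \<Longrightarrow> h c \<in> carrier G" for c unfolding h_def using f inD by blast
  have hinj1: "c1 \<in> carrier G \<Longrightarrow> (Inr c1, Inr c2) \<in> R1 \<Longrightarrow> h c1 \<noteq> h c2" for c1 c2
  proof
    assume c1: "c1 \<in> carrier G" and R: "(Inr c1, Inr c2) \<in> R1" and e: "h c1 = h c2"
    have v: "Inr c2 \<in> D1" using O(5)[OF R] by blast
    have "c1 \<in> Sc (Inr c2)" using R unfolding Sc_def by blast
    hence "h c1 \<in> F f (Inr c2)" unfolding F_def h_def by simp
    thus False using f[OF v] e unfolding h_def by simp
  qed
  have hinj: "c1 \<in> carrier G \<Longrightarrow> c2 \<in> carrier G \<Longrightarrow> h c1 = h c2 \<Longrightarrow> c1 = c2" for c1 c2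
  proof (rule ccontr)
    assume c: "c1 \<in> carrier G" "c2 \<in> carrier G" "h c1 = h c2" "c1 \<noteq> c2"
    hence "(Inr c1, Inr c2) \<in> R1 \<or> (Inr c2, Inr c1) \<in> R1" using O(3)[OF inD(2) inD(2)] by blast
    thus False using hinj1 c by metis
  qed
  have kinj1: "r1 \<in> carrier G \<Longrightarrow> (Inl r1, Inl r2) \<in> R1 \<Longrightarrow> k r1 \<noteq> k r2" for r1 r2
  proof
    assume r1: "r1 \<in> carrier G" and R: "(Inl r1, Inl r2) \<in> R1" and e: "k r1 = k r2"
    have v: "Inl r2 \<in> D1" using O(5)[OF R] by blast
    have "r1 \<in> Sr (Inl r2)" using R unfolding Sr_def by blast
    hence "k r1 \<in> F f (Inl r2)" unfolding F_def k_def by simp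
    thus False using f[OF v] e unfolding k_def by simp
  qed
  have kinj: "r1 \<in> carrier G \<Longrightarrow> r2 \<in> carrier G \<Longrightarrow> k r1 = k r2 \<Longrightarrow> r1 = r2" for r1 r2
  proof (rule ccontr)
    assume c: "r1 \<in> carrier G" "r2 \<in> carrier G" "k r1 = k r2" "r1 \<noteq> r2"
    hence "(Inl r1, Inl r2) \<in> R1 \<or> (Inl r2, Inl r1) \<in> R1" using O(3)[OF inD(1) inD(1)] by blast
    thus False using kinj1 c by metis
  qed
  define Dv where "Dv p = inv (k (snd p)) \<otimes> h (fst p)" for p
  have Dvc: "p \<in> carrier G \<times> carrier G \<Longrightarrow> Dv p \<in> carrier G" for p
  proof -
    assume p: "p \<in> carrier G \<times> carrier G"
    have "snd p \<in> carrier G" "fst p \<in> carrier G" using p by (simp_all add: mem_Times_iff)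
    hence "k (snd p) \<in> carrier G" "h (fst p) \<in> carrier G" using kc hc by simp_all
    thus ?thesis unfolding Dv_def by simp
  qed
  define m where "m p = (if (Inl (snd p), Inr (fst p)) \<in> R1 then Inr (fst p) else Inl (snd p))" for p :: "'a \<times> 'a"
  have mD: "p \<in> carrier G \<times> carrier G \<Longrightarrow> m p \<in> D1" for p
  proof -
    assume p: "p \<in> carrier G \<times> carrier G"
    have "snd p \<in> carrier G" "fst p \<in> carrier G" using p by (simp_all add: mem_Times_iff)
    hence "Inl (snd p) \<in> D1" "Inr (fst p) \<in> D1" using inD by simp_all
    thus ?thesis unfolding m_def by simp
  qed
  have mle: "p \<in> carrier G \<times> carrier G \<Longrightarrow> (Inl (snd p) = m p \<or> (Inl (snd p), m p) \<in> R1) \<and> (Inr (fst p) = m p \<or> (Inr (fst p), m p) \<in> R1)" for p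
  proof -
    assume p: "p \<in> carrier G \<times> carrier G"
    have "Inl (snd p) \<noteq> Inr (fst p)" by simp
    moreover have "Inl (snd p) \<in> D1" "Inr (fst p) \<in> D1" using inD p by auto
    ultimately have "(Inl (snd p), Inr (fst p)) \<in> R1 \<or> (Inr (fst p), Inl (snd p)) \<in> R1" using O(3) by blast
    thus ?thesis unfolding m_def by auto
  qed
  have below: "x = m p1 \<or> (x, m p1) \<in> R1 \<Longrightarrow> (m p1, M) \<in> R1 \<Longrightarrow> (x, M) \<in> R1" for x p1 M
  proof -
    assume a: "x = m p1 \<or> (x, m p1) \<in> R1" and b: "(m p1, M) \<in> R1"
    show ?thesis
    proof (cases "x = m p1")
      case True thus ?thesis using b by simp
    next
      case False thus ?thesis using a b O(4)[of x "m p1" M] by simp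
    qed
  qed
  have L: "False" if p1: "p1 \<in> carrier G \<times> carrier G" and p2: "p2 \<in> carrier G \<times> carrier G" and ne: "p1 \<noteq> p2"
    and eq: "Dv p1 = Dv p2" and le: "m p1 = m p2 \<or> (m p1, m p2) \<in> R1" for p1 p2
  proof -
    define c1 where "c1 = fst p1"
    define r1 where "r1 = snd p1"
    define c2 where "c2 = fst p2"
    define r2 where "r2 = snd p2"
    have P1: "p1 = (c1, r1)" unfolding c1_def r1_def by simp
    have P2: "p2 = (c2, r2)" unfolding c2_def r2_def by simp
    have cs: "c1 \<in> carrier G" "r1 \<in> carrier G" "c2 \<in> carrier G" "r2 \<in> carrier G"
      using p1 p2 unfolding c1_def r1_def c2_def r2_def by (simp_all add: mem_Times_iff)
    have ml1: "(Inl r1 = m p1 \<or> (Inl r1, m p1) \<in> R1) \<and> (Inr c1 = m p1 \<or> (Inr c1, m p1) \<in> R1)"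
      using mle[OF p1] unfolding c1_def r1_def .
    have ml2: "(Inl r2 = m p2 \<or> (Inl r2, m p2) \<in> R1) \<and> (Inr c2 = m p2 \<or> (Inr c2, m p2) \<in> R1)"
      using mle[OF p2] unfolding c2_def r2_def .
    have m1: "m p1 = (if (Inl r1, Inr c1) \<in> R1 then Inr c1 else Inl r1)" unfolding m_def c1_def r1_def ..
    have m2: "m p2 = (if (Inl r2, Inr c2) \<in> R1 then Inr c2 else Inl r2)" unfolding m_def c2_def r2_def ..
    have D1e: "Dv p1 = inv (k r1) \<otimes> h c1" unfolding Dv_def c1_def r1_def ..
    have D2e: "Dv p2 = inv (k r2) \<otimes> h c2" unfolding Dv_def c2_def r2_def ..
    have eq': "inv (k r1) \<otimes> h c1 = inv (k r2) \<otimes> h c2" using eq D1e D2e by simp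
    have kcs: "k r1 \<in> carrier G" "k r2 \<in> carrier G" "h c1 \<in> carrier G" "h c2 \<in> carrier G"
      using kc hc cs by simp_all
    have Dvs: "Dv p1 \<in> carrier G" using Dvc[OF p1] .
    have oin: "Dv p1 \<in> Old f M" if a1: "(Inl r1, M) \<in> R1" and a2: "(Inr c1, M) \<in> R1" for M
    proof -
      have "(r1, c1) \<in> Sr M \<times> Sc M" unfolding Sr_def Sc_def using a1 a2 by simp
      moreover have "Dv p1 = (\<lambda>(r',c'). inv (f (Inl r')) \<otimes> f (Inr c')) (r1, c1)" unfolding D1e k_def h_def by simp
      ultimately show ?thesis unfolding Old_def by (rule rev_image_eqI)
    qed
    show False
    proof (cases "(Inl r2, Inr c2) \<in> R1")
      case True
      hence M: "m p2 = Inr c2" unfolding m2 by simp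
      show False
      proof (cases "m p1 = m p2")
        case True
        hence "m p1 = Inr c2" using M by simp
        hence "c1 = c2" unfolding m1 by (simp split: if_splits)
        hence "k r1 = k r2" using ga4[OF kcs(1) kcs(2) kcs(3)] eq' by simp
        hence "r1 = r2" using kinj cs by blast
        thus False using ne \<open>c1 = c2\<close> P1 P2 by simp
      next
        case False
        hence lt: "(m p1, Inr c2) \<in> R1" using le M by simp
        have a1: "(Inl r1, Inr c2) \<in> R1" using below[of "Inl r1" p1 "Inr c2"] ml1 lt by simp
        have a2: "(Inr c1, Inr c2) \<in> R1" using below[of "Inr c1" p1 "Inr c2"] ml1 lt by simp
        have o: "Dv p1 \<in> Old f (Inr c2)" using oin[OF a1 a2] .
        have r2s: "r2 \<in> Sr (Inr c2)" unfolding Sr_def using True by simp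
        have "(r2, Dv p1) \<in> Sr (Inr c2) \<times> Old f (Inr c2)" using r2s o by simp
        hence "f (Inl r2) \<otimes> Dv p1 \<in> F f (Inr c2)" unfolding F_def by force
        moreover have "h c2 = k r2 \<otimes> Dv p2" using ga2[OF kcs(2) kcs(4) Dvc[OF p2]] D2e by simp
        ultimately have "f (Inr c2) \<in> F f (Inr c2)" using eq unfolding k_def h_def by simp
        thus False using f[OF inD(2)[OF cs(3)]] by simp
      qed
    next
      case False
      hence M: "m p2 = Inl r2" unfolding m2 by simp
      show False
      proof (cases "m p1 = m p2")
        case True
        hence "m p1 = Inl r2" using M by simp
        hence "r1 = r2" unfolding m1 by (simp split: if_splits)
        hence "h c1 = h c2" using ga3[OF kcs(1) kcs(3) kcs(4)] eq' by simp
        hence "c1 = c2" using hinj cs by blast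
        thus False using ne \<open>r1 = r2\<close> P1 P2 by simp
      next
        case False
        hence lt: "(m p1, Inl r2) \<in> R1" using le M by simp
        have a1: "(Inl r1, Inl r2) \<in> R1" using below[of "Inl r1" p1 "Inl r2"] ml1 lt by simp
        have a2: "(Inr c1, Inl r2) \<in> R1" using below[of "Inr c1" p1 "Inl r2"] ml1 lt by simp
        have o: "Dv p1 \<in> Old f (Inl r2)" using oin[OF a1 a2] .
        have "Inr c2 = m p2 \<or> (Inr c2, m p2) \<in> R1" using ml2 by simp
        hence "(Inr c2, Inl r2) \<in> R1" using M by simp
        hence c2s: "c2 \<in> Sc (Inl r2)" unfolding Sc_def by simp
        have "(c2, Dv p1) \<in> Sc (Inl r2) \<times> Old f (Inl r2)" using c2s o by simp
        hence "f (Inr c2) \<otimes> inv (Dv p1) \<in> F f (Inl r2)" unfolding F_def by force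
        moreover have "k r2 = h c2 \<otimes> inv (Dv p2)" using ga1[OF kcs(2) kcs(4) Dvc[OF p2]] D2e by simp
        ultimately have "f (Inl r2) \<in> F f (Inl r2)" using eq unfolding k_def h_def by simp
        thus False using f[OF inD(1)[OF cs(4)]] by simp
      qed
    qed
  qed
  have "inj_on Dv (carrier G \<times> carrier G)"
  proof (rule inj_onI, rule ccontr)
    fix p1 p2 assume p: "p1 \<in> carrier G \<times> carrier G" "p2 \<in> carrier G \<times> carrier G" "Dv p1 = Dv p2" "p1 \<noteq> p2"
    have "m p1 = m p2 \<or> (m p1, m p2) \<in> R1 \<or> (m p2, m p1) \<in> R1" using O(3)[OF mD[OF p(1)] mD[OF p(2)]] by blast
    thus False using L[OF p(1) p(2) p(4) p(3)] L[OF p(2) p(1) _ p(3)[symmetric]] p(4) by metis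
  qed
  thus ?thesis using kc hc unfolding Dv_def by blast
qed

end

context bsetup
begin

lemma gb1: "k \<in> carrier G \<Longrightarrow> z \<in> carrier G \<Longrightarrow> y \<in> carrier G \<Longrightarrow> w \<in> carrier G \<Longrightarrow>
   inv k \<otimes> z \<otimes> inv y = w \<Longrightarrow> z = k \<otimes> w \<otimes> y"
proof -
  assume c: "k \<in> carrier G" "z \<in> carrier G" "y \<in> carrier G" "w \<in> carrier G" and e: "inv k \<otimes> z \<otimes> inv y = w"
  have "k \<otimes> w \<otimes> y = k \<otimes> (inv k \<otimes> z \<otimes> inv y) \<otimes> y" using e by simp
  also have "\<dots> = z" using c by (simp add: m_assoc[symmetric]) (simp add: m_assoc)
  finally show ?thesis by simp
qed

lemma gb2: "a \<in> carrier G \<Longrightarrow> h \<in> carrier G \<Longrightarrow> z \<in> carrier G \<Longrightarrow> w \<in> carrier G \<Longrightarrow>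
   a \<otimes> inv (inv h \<otimes> z) = w \<Longrightarrow> z = h \<otimes> inv w \<otimes> a"
proof -
  assume c: "a \<in> carrier G" "h \<in> carrier G" "z \<in> carrier G" "w \<in> carrier G" and e: "a \<otimes> inv (inv h \<otimes> z) = w"
  have i: "inv (inv h \<otimes> z) = inv z \<otimes> h" using c by (simp add: inv_mult_group)
  have "inv w = inv (a \<otimes> (inv z \<otimes> h))" using e i by simp
  also have "\<dots> = inv h \<otimes> z \<otimes> inv a" using c by (simp add: inv_mult_group m_assoc)
  finally have "h \<otimes> inv w \<otimes> a = h \<otimes> (inv h \<otimes> z \<otimes> inv a) \<otimes> a" by simp
  also have "\<dots> = z" using c by (simp add: m_assoc[symmetric]) (simp add: m_assoc)
  finally show ?thesis by simp
qed

lemma gb4: "k \<in> carrier G \<Longrightarrow> h \<in> carrier G \<Longrightarrow> z \<in> carrier G \<Longrightarrow>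
   inv k \<otimes> z \<otimes> inv (inv h \<otimes> z) = inv k \<otimes> h"
proof -
  assume c: "k \<in> carrier G" "h \<in> carrier G" "z \<in> carrier G"
  have "inv (inv h \<otimes> z) = inv z \<otimes> h" using c by (simp add: inv_mult_group)
  thus ?thesis using c by (simp add: m_assoc[symmetric]) (simp add: m_assoc)
qed

lemma gb5: "x \<in> carrier G \<Longrightarrow> y1 \<in> carrier G \<Longrightarrow> y2 \<in> carrier G \<Longrightarrow> x \<otimes> inv y1 = x \<otimes> inv y2 \<Longrightarrow> y1 = y2"
proof -
  assume c: "x \<in> carrier G" "y1 \<in> carrier G" "y2 \<in> carrier G" and e: "x \<otimes> inv y1 = x \<otimes> inv y2"
  have "inv y1 = inv x \<otimes> (x \<otimes> inv y1)" using c by (simp add: m_assoc[symmetric])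
  also have "\<dots> = inv y2" using e c by (simp add: m_assoc[symmetric])
  finally show ?thesis using c by (metis inv_inv)
qed

end

context bsetup
begin

lemma phase2:
  assumes kc: "\<And>r. r \<in> carrier G \<Longrightarrow> k r \<in> carrier G" and hc: "\<And>c. c \<in> carrier G \<Longrightarrow> h c \<in> carrier G"
    and Dinj: "inj_on (\<lambda>p. inv (k (snd p)) \<otimes> h (fst p)) (carrier G \<times> carrier G)"
  shows "\<exists>z tag. (\<forall>p\<in>carrier G \<times> carrier G. z p \<in> carrier G) \<and> inj_on z (carrier G \<times> carrier G) \<and>
     (\<forall>pq. tag pq < (3::nat)) \<and>
     inj_on (\<lambda>pq. (inv (k (snd (fst pq))) \<otimes> z (fst pq) \<otimes> inv (inv (h (fst (snd pq))) \<otimes> z (snd pq)), tag pq))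
       ((carrier G \<times> carrier G) \<times> (carrier G \<times> carrier G))"
proof -
  define D2 where "D2 = carrier G \<times> carrier G"
  have "|D2| =o |carrier G|" unfolding D2_def by (rule card_of_Times_same_infinite[OF carrier_inf])
  hence "|D2| \<le>o |carrier G|" by (rule ordIso_imp_ordLeq)
  then obtain \<iota> where \<iota>: "inj_on \<iota> D2" "\<iota> ` D2 \<subseteq> carrier G" unfolding card_of_ordLeq[symmetric] by blast
  define R2 where "R2 = {(u,v). u \<in> D2 \<and> v \<in> D2 \<and> (\<iota> u, \<iota> v) \<in> |carrier G| \<and> \<iota> u \<noteq> \<iota> v}"
  note O = ord_inj[OF \<iota> R2_def]
  define S where "S p = {q. (q,p) \<in> R2}" for p
  define a where "a f q = inv (k (snd q)) \<otimes> f q" for f :: "'a \<times> 'a \<Rightarrow> 'a" and q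
  define b where "b f q = inv (h (fst q)) \<otimes> f q" for f :: "'a \<times> 'a \<Rightarrow> 'a" and q
  define Old where "Old f p = (\<lambda>(u,w). a f u \<otimes> inv (b f w)) ` (S p \<times> S p)" for f p
  define F where "F f p = f ` S p \<union> (\<lambda>u. k (snd p) \<otimes> a f u) ` S p \<union> (\<lambda>u. h (fst p) \<otimes> b f u) ` S p
     \<union> (\<lambda>(w,q). k (snd p) \<otimes> w \<otimes> b f q) ` (Old f p \<times> S p) \<union> (\<lambda>(w,q). h (fst p) \<otimes> inv w \<otimes> a f q) ` (Old f p \<times> S p)" for f p
  have dep: "F f p = F g p" if eq: "\<And>u. (u,p) \<in> R2 \<Longrightarrow> f u = g u" for f g p
  proof -
    have e0: "u \<in> S p \<Longrightarrow> f u = g u" for u using eq unfolding S_def by blast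
    have ea: "u \<in> S p \<Longrightarrow> a f u = a g u" for u unfolding a_def using e0 by simp
    have eb: "u \<in> S p \<Longrightarrow> b f u = b g u" for u unfolding b_def using e0 by simp
    have eo: "Old f p = Old g p" unfolding Old_def by (rule image_cong) (auto simp: ea eb)
    have "f ` S p = g ` S p" by (rule image_cong) (auto simp: e0)
    moreover have "(\<lambda>u. k (snd p) \<otimes> a f u) ` S p = (\<lambda>u. k (snd p) \<otimes> a g u) ` S p" by (rule image_cong) (auto simp: ea)
    moreover have "(\<lambda>u. h (fst p) \<otimes> b f u) ` S p = (\<lambda>u. h (fst p) \<otimes> b g u) ` S p" by (rule image_cong) (auto simp: eb)
    moreover have "(\<lambda>(w,q). k (snd p) \<otimes> w \<otimes> b f q) ` (Old f p \<times> S p) = (\<lambda>(w,q). k (snd p) \<otimes> w \<otimes> b g q) ` (Old g p \<times> S p)"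
      unfolding eo by (rule image_cong) (auto simp: eb)
    moreover have "(\<lambda>(w,q). h (fst p) \<otimes> inv w \<otimes> a f q) ` (Old f p \<times> S p) = (\<lambda>(w,q). h (fst p) \<otimes> inv w \<otimes> a g q) ` (Old g p \<times> S p)"
      unfolding eo by (rule image_cong) (auto simp: ea)
    ultimately show ?thesis unfolding F_def by simp
  qed
  have Ss: "p \<in> D2 \<Longrightarrow> |S p| <o |carrier G|" for p unfolding S_def by (rule O(2))
  have Olds: "p \<in> D2 \<Longrightarrow> |Old f p| <o |carrier G|" for f p
    unfolding Old_def by (rule Xs_image[OF Xs_times[OF Ss Ss]])
  have Fs: "p \<in> D2 \<Longrightarrow> |F f p| <o |carrier G|" for f p
  proof -
    assume p: "p \<in> D2"
    note s = Ss[OF p] Olds[OF p]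
    show ?thesis unfolding F_def
      by (intro Xs_Un Xs_image Xs_times s)
  qed
  have "\<exists>f. \<forall>v. v \<in> D2 \<longrightarrow> f v \<in> carrier G \<and> f v \<notin> F f v"
  proof (rule greedy[OF O(1)])
    show "F f v = F g v" if "\<And>u. (u,v) \<in> R2 \<Longrightarrow> f u = g u" for f g v by (rule dep) (rule that)
    show "carrier G - F f v \<noteq> {}" if "v \<in> D2" for f v by (rule Xs_ne[OF Fs[OF that]])
  qed
  then obtain z where zf: "\<And>v. v \<in> D2 \<Longrightarrow> z v \<in> carrier G \<and> z v \<notin> F z v" by blast
  define A where "A = a z"
  define B where "B = b z"
  define \<Psi> where "\<Psi> p q = A p \<otimes> inv (B q)" for p q
  have pc: "p \<in> D2 \<Longrightarrow> fst p \<in> carrier G \<and> snd p \<in> carrier G" for p unfolding D2_def by (simp add: mem_Times_iff)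
  have zc: "p \<in> D2 \<Longrightarrow> z p \<in> carrier G" for p using zf by blast
  have kpc: "p \<in> D2 \<Longrightarrow> k (snd p) \<in> carrier G" for p using kc pc by blast
  have hpc: "p \<in> D2 \<Longrightarrow> h (fst p) \<in> carrier G" for p using hc pc by blast
  have Ac: "p \<in> D2 \<Longrightarrow> A p \<in> carrier G" for p unfolding A_def a_def using zc kpc by simp
  have Bc: "p \<in> D2 \<Longrightarrow> B p \<in> carrier G" for p unfolding B_def b_def using zc hpc by simp
  have \<Psi>c: "p \<in> D2 \<Longrightarrow> q \<in> D2 \<Longrightarrow> \<Psi> p q \<in> carrier G" for p q unfolding \<Psi>_def using Ac Bc by simp
  have SD: "u \<in> S p \<Longrightarrow> u \<in> D2" for u p unfolding S_def using O(5) by blast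
  have nF: "p \<in> D2 \<Longrightarrow> z p \<notin> F z p" for p using zf by blast
  have c1: "p \<in> D2 \<Longrightarrow> u \<in> S p \<Longrightarrow> z u \<noteq> z p" for p u
  proof
    assume p: "p \<in> D2" and u: "u \<in> S p" and e: "z u = z p"
    have "z p \<in> z ` S p" using u e by (metis imageI)
    thus False using nF[OF p] unfolding F_def by blast
  qed
  have c2: "p \<in> D2 \<Longrightarrow> u \<in> S p \<Longrightarrow> A u \<noteq> A p" for p u
  proof
    assume p: "p \<in> D2" and u: "u \<in> S p" and e: "A u = A p"
    have "z p = k (snd p) \<otimes> A p" using ga2[OF kpc[OF p] zc[OF p] Ac[OF p]] unfolding A_def a_def by simp
    hence "z p \<in> (\<lambda>u. k (snd p) \<otimes> a z u) ` S p" using u e unfolding A_def by (simp add: rev_image_eqI)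
    thus False using nF[OF p] unfolding F_def by blast
  qed
  have c3: "p \<in> D2 \<Longrightarrow> u \<in> S p \<Longrightarrow> B u \<noteq> B p" for p u
  proof
    assume p: "p \<in> D2" and u: "u \<in> S p" and e: "B u = B p"
    have "z p = h (fst p) \<otimes> B p" using ga2[OF hpc[OF p] zc[OF p] Bc[OF p]] unfolding B_def b_def by simp
    hence "z p \<in> (\<lambda>u. h (fst p) \<otimes> b z u) ` S p" using u e unfolding B_def by (simp add: rev_image_eqI)
    thus False using nF[OF p] unfolding F_def by blast
  qed
  have OldI: "u \<in> S p \<Longrightarrow> w \<in> S p \<Longrightarrow> \<Psi> u w \<in> Old z p" for u w p
    unfolding Old_def \<Psi>_def A_def B_def by (rule rev_image_eqI[of "(u,w)"]) simp_all
  have c4: "p \<in> D2 \<Longrightarrow> q \<in> S p \<Longrightarrow> w \<in> Old z p \<Longrightarrow> \<Psi> p q \<noteq> w" for p q w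
  proof
    assume p: "p \<in> D2" and q: "q \<in> S p" and w: "w \<in> Old z p" and e: "\<Psi> p q = w"
    have wc: "w \<in> carrier G" using e \<Psi>c[OF p SD[OF q]] by simp
    have "inv (k (snd p)) \<otimes> z p \<otimes> inv (B q) = w" using e unfolding \<Psi>_def A_def a_def by simp
    hence "z p = k (snd p) \<otimes> w \<otimes> B q" by (rule gb1[OF kpc[OF p] zc[OF p] Bc[OF SD[OF q]] wc])
    hence "z p \<in> (\<lambda>(w,q). k (snd p) \<otimes> w \<otimes> b z q) ` (Old z p \<times> S p)" using w q unfolding B_def
      by (simp add: rev_image_eqI[of "(w,q)"])
    thus False using nF[OF p] unfolding F_def by blast
  qed
  have c5: "p \<in> D2 \<Longrightarrow> q \<in> S p \<Longrightarrow> w \<in> Old z p \<Longrightarrow> \<Psi> q p \<noteq> w" for p q w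
  proof
    assume p: "p \<in> D2" and q: "q \<in> S p" and w: "w \<in> Old z p" and e: "\<Psi> q p = w"
    have wc: "w \<in> carrier G" using e \<Psi>c[OF SD[OF q] p] by simp
    have "A q \<otimes> inv (inv (h (fst p)) \<otimes> z p) = w" using e unfolding \<Psi>_def B_def b_def by simp
    hence "z p = h (fst p) \<otimes> inv w \<otimes> A q" by (rule gb2[OF Ac[OF SD[OF q]] hpc[OF p] zc[OF p] wc])
    hence "z p \<in> (\<lambda>(w,q). h (fst p) \<otimes> inv w \<otimes> a z q) ` (Old z p \<times> S p)" using w q unfolding A_def
      by (simp add: rev_image_eqI[of "(w,q)"])
    thus False using nF[OF p] unfolding F_def by blast
  qed
  have tot: "p1 \<in> D2 \<Longrightarrow> p2 \<in> D2 \<Longrightarrow> p1 \<noteq> p2 \<Longrightarrow> p1 \<in> S p2 \<or> p2 \<in> S p1" for p1 p2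
    unfolding S_def using O(3) by blast
  have trS: "u \<in> S v \<Longrightarrow> v \<in> S w \<Longrightarrow> u \<in> S w" for u v w unfolding S_def using O(4) by blast
  have zinj: "inj_on z D2"
  proof (rule inj_onI, rule ccontr)
    fix p1 p2 assume p: "p1 \<in> D2" "p2 \<in> D2" "z p1 = z p2" "p1 \<noteq> p2"
    thus False using tot[OF p(1) p(2) p(4)] c1[OF p(1)] c1[OF p(2)] by metis
  qed
  have Ainj: "p1 \<in> D2 \<Longrightarrow> p2 \<in> D2 \<Longrightarrow> A p1 = A p2 \<Longrightarrow> p1 = p2" for p1 p2
    using tot c2 by metis
  have Binj: "p1 \<in> D2 \<Longrightarrow> p2 \<in> D2 \<Longrightarrow> B p1 = B p2 \<Longrightarrow> p1 = p2" for p1 p2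
    using tot c3 by metis
  have diag: "p \<in> D2 \<Longrightarrow> \<Psi> p p = inv (k (snd p)) \<otimes> h (fst p)" for p
    unfolding \<Psi>_def A_def B_def a_def b_def by (rule gb4[OF kpc hpc zc])
  define tag where "tag pq = (if fst pq = snd pq then 0 else if snd pq \<in> S (fst pq) then 1 else (2::nat))" for pq
  have T1: "False" if "p1 \<in> D2" "p2 \<in> D2" "q1 \<in> S p1" "q2 \<in> S p2" "p1 \<in> S p2" "\<Psi> p1 q1 = \<Psi> p2 q2" for p1 p2 q1 q2
  proof -
    have "\<Psi> p1 q1 \<in> Old z p2" using OldI[OF that(5) trS[OF that(3) that(5)]] .
    thus False using c4[OF that(2) that(4)] that(6) by metis
  qed
  have T2: "False" if "p1 \<in> D2" "p2 \<in> D2" "p1 \<in> S q1" "p2 \<in> S q2" "q1 \<in> S q2" "q2 \<in> D2" "\<Psi> p1 q1 = \<Psi> p2 q2" for p1 p2 q1 q2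
  proof -
    have "\<Psi> p1 q1 \<in> Old z q2" using OldI[OF trS[OF that(3) that(5)] that(5)] .
    thus False using c5[OF that(6) that(4)] that(7) by metis
  qed
  have main: "inj_on (\<lambda>pq. (\<Psi> (fst pq) (snd pq), tag pq)) (D2 \<times> D2)"
  proof (rule inj_onI)
    fix x y assume x: "x \<in> D2 \<times> D2" and y: "y \<in> D2 \<times> D2" and e: "(\<Psi> (fst x) (snd x), tag x) = (\<Psi> (fst y) (snd y), tag y)"
    define p1 where "p1 = fst x"
    define q1 where "q1 = snd x"
    define p2 where "p2 = fst y"
    define q2 where "q2 = snd y"
    have X: "x = (p1,q1)" "y = (p2,q2)" unfolding p1_def q1_def p2_def q2_def by simp_all
    have D: "p1 \<in> D2" "q1 \<in> D2" "p2 \<in> D2" "q2 \<in> D2" using x y unfolding X by auto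
    have eP: "\<Psi> p1 q1 = \<Psi> p2 q2" and eT: "tag (p1,q1) = tag (p2,q2)" using e unfolding X by simp_all
    show "x = y" unfolding X
    proof (cases "p1 = q1")
      case True
      hence "p2 = q2" using eT unfolding tag_def by (simp split: if_splits)
      hence "inv (k (snd p1)) \<otimes> h (fst p1) = inv (k (snd p2)) \<otimes> h (fst p2)"
        using eP True diag D by simp
      hence "p1 = p2" using Dinj D unfolding D2_def inj_on_def by blast
      thus "(p1,q1) = (p2,q2)" using True \<open>p2 = q2\<close> by simp
    next
      case ne1: False
      hence ne2: "p2 \<noteq> q2" using eT unfolding tag_def by (simp split: if_splits)
      show "(p1,q1) = (p2,q2)"
      proof (cases "q1 \<in> S p1")
        case True
        hence q2s: "q2 \<in> S p2" using eT ne1 ne2 unfolding tag_def by (simp split: if_splits)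
        show ?thesis
        proof (cases "p1 = p2")
          case True
          hence "A p1 \<otimes> inv (B q1) = A p1 \<otimes> inv (B q2)" using eP unfolding \<Psi>_def by simp
          hence "B q1 = B q2" using gb5 Ac Bc D by blast
          hence "q1 = q2" using Binj D by blast
          thus ?thesis using True by simp
        next
          case False
          hence "p1 \<in> S p2 \<or> p2 \<in> S p1" using tot D by blast
          thus ?thesis using T1[OF D(1) D(3) True q2s _ eP] T1[OF D(3) D(1) q2s True _ eP[symmetric]] by blast
        qed
      next
        case False
        hence q1s: "p1 \<in> S q1" using tot D ne1 by blast
        have "q2 \<notin> S p2" using eT ne1 ne2 False unfolding tag_def by (simp split: if_splits)
        hence q2s: "p2 \<in> S q2" using tot D ne2 by blast
        show ?thesis
        proof (cases "q1 = q2")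
          case True
          hence "A p1 \<otimes> inv (B q1) = A p2 \<otimes> inv (B q1)" using eP unfolding \<Psi>_def by simp
          hence "A p1 = A p2" using rcan Ac Bc D by (meson inv_closed)
          hence "p1 = p2" using Ainj D by blast
          thus ?thesis using True by simp
        next
          case False
          hence "q1 \<in> S q2 \<or> q2 \<in> S q1" using tot D by blast
          thus ?thesis using T2[OF D(1) D(3) q1s q2s _ D(4) eP] T2[OF D(3) D(1) q2s q1s _ D(2) eP[symmetric]] by blast
        qed
      qed
    qed
  qed
  have "\<forall>pq. tag pq < (3::nat)" unfolding tag_def by simp
  moreover have "\<forall>p\<in>carrier G \<times> carrier G. z p \<in> carrier G" using zc unfolding D2_def by blast
  moreover note zinj[unfolded D2_def]
  moreover have "inj_on (\<lambda>pq. (inv (k (snd (fst pq))) \<otimes> z (fst pq) \<otimes> inv (inv (h (fst (snd pq))) \<otimes> z (snd pq)), tag pq))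
       ((carrier G \<times> carrier G) \<times> (carrier G \<times> carrier G))"
    using main unfolding D2_def \<Psi>_def A_def B_def a_def b_def .
  ultimately show ?thesis by blast
qed

end

context bsetup
begin

lemma gc1: "i \<in> carrier G \<Longrightarrow> j \<in> carrier G \<Longrightarrow> x \<in> carrier G \<Longrightarrow> y \<in> carrier G \<Longrightarrow>
  i \<otimes> x = j \<otimes> y \<Longrightarrow> x \<otimes> inv y = inv i \<otimes> j"
proof -
  assume c: "i \<in> carrier G" "j \<in> carrier G" "x \<in> carrier G" "y \<in> carrier G" and e: "i \<otimes> x = j \<otimes> y"
  have "x = inv i \<otimes> (i \<otimes> x)" using c by (simp add: m_assoc[symmetric])
  also have "\<dots> = inv i \<otimes> (j \<otimes> y)" using e by simp
  finally have "x \<otimes> inv y = inv i \<otimes> (j \<otimes> y) \<otimes> inv y" by simp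
  also have "\<dots> = inv i \<otimes> j" using c by (simp add: m_assoc)
  finally show ?thesis .
qed

lemma gz: "k \<in> carrier G \<Longrightarrow> z \<in> carrier G \<Longrightarrow> k \<otimes> (inv k \<otimes> z) = z"
  by (simp add: m_assoc[symmetric])

lemma ent_mem: "i \<in> I \<Longrightarrow> I \<subseteq> carrier G \<Longrightarrow> x \<in> S \<Longrightarrow> S \<subseteq> carrier G \<Longrightarrow> i \<otimes> x \<in> ent G I `` S"
  unfolding ent_Image by blast

lemma ent_elim: "w \<in> ent G I `` S \<Longrightarrow> I \<subseteq> carrier G \<Longrightarrow> \<exists>i\<in>insert \<one> I. \<exists>x\<in>S. x \<in> carrier G \<and> w = i \<otimes> x"
proof -
  assume w: "w \<in> ent G I `` S" and I: "I \<subseteq> carrier G"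
  hence "w \<in> carrier G \<and> (\<exists>x\<in>S. x \<in> carrier G \<and> (w = x \<or> (\<exists>i\<in>I. w = i \<otimes> x)))" by (simp only: ent_Image)
  then obtain x where x: "x \<in> S" "x \<in> carrier G" "w = x \<or> (\<exists>i\<in>I. w = i \<otimes> x)" by blast
  show ?thesis
  proof (cases "w = x")
    case True
    hence "w = \<one> \<otimes> x" using x(2) by simp
    thus ?thesis using x(1,2) by blast
  next
    case False
    then obtain i where "i \<in> I" "w = i \<otimes> x" using x(3) by blast
    thus ?thesis using x(1,2) by blast
  qed
qed

end

context bsetup
begin

lemma config: "\<exists>z k h A B. (\<forall>c\<in>carrier G. \<forall>r\<in>carrier G. z (c,r) \<in> carrier G \<and> k r \<in> carrier G \<and> h c \<in> carrier G)
  \<and> inj_on z (carrier G \<times> carrier G) \<and> A \<subseteq> carrier G \<and> B \<subseteq> carrier G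
  \<and> asymp_disjoint (carrier G) (ball_structure G \<kappa>) A B
  \<and> (\<forall>c\<in>carrier G. \<forall>r\<in>carrier G. \<forall>Ks. Ks \<subseteq> carrier G \<and> k r \<in> Ks \<longrightarrow> z (c,r) \<in> ent G Ks `` A)
  \<and> (\<forall>c\<in>carrier G. \<forall>r\<in>carrier G. \<forall>Ks. Ks \<subseteq> carrier G \<and> h c \<in> Ks \<longrightarrow> z (c,r) \<in> ent G Ks `` B)"
proof -
  obtain k h where kc: "\<forall>r\<in>carrier G. k r \<in> carrier G" and hc: "\<forall>c\<in>carrier G. h c \<in> carrier G"
    and Dinj: "inj_on (\<lambda>p. inv (k (snd p)) \<otimes> h (fst p)) (carrier G \<times> carrier G)"
    using phase1 by (elim exE conjE) (rule that, assumption+)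
  have kc': "\<And>r. r \<in> carrier G \<Longrightarrow> k r \<in> carrier G" using kc by blast
  have hc': "\<And>c. c \<in> carrier G \<Longrightarrow> h c \<in> carrier G" using hc by blast
  have ex2: "\<exists>z tag. (\<forall>p\<in>carrier G \<times> carrier G. z p \<in> carrier G) \<and> inj_on z (carrier G \<times> carrier G) \<and>
     (\<forall>pq. tag pq < (3::nat)) \<and>
     inj_on (\<lambda>pq. (inv (k (snd (fst pq))) \<otimes> z (fst pq) \<otimes> inv (inv (h (fst (snd pq))) \<otimes> z (snd pq)), tag pq))
       ((carrier G \<times> carrier G) \<times> (carrier G \<times> carrier G))"
  proof (rule phase2[of k h])
    show "k r \<in> carrier G" if "r \<in> carrier G" for r using kc that by blast
    show "h c \<in> carrier G" if "c \<in> carrier G" for c using hc that by blast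
    show "inj_on (\<lambda>p. inv (k (snd p)) \<otimes> h (fst p)) (carrier G \<times> carrier G)" by (rule Dinj)
  qed
  obtain z tag where zc: "\<forall>p\<in>carrier G \<times> carrier G. z p \<in> carrier G" and zinj: "inj_on z (carrier G \<times> carrier G)"
    and tag3: "\<forall>pq. tag pq < (3::nat)"
    and Pinj: "inj_on (\<lambda>pq. (inv (k (snd (fst pq))) \<otimes> z (fst pq) \<otimes> inv (inv (h (fst (snd pq))) \<otimes> z (snd pq)), tag pq))
       ((carrier G \<times> carrier G) \<times> (carrier G \<times> carrier G))"
    using ex2 by (elim exE conjE) (rule that, assumption+)
  define a where "a p = inv (k (snd p)) \<otimes> z p" for p
  define b where "b p = inv (h (fst p)) \<otimes> z p" for p
  define XX where "XX = carrier G \<times> carrier G"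
  define A where "A = a ` XX"
  define B where "B = b ` XX"
  have pc: "p \<in> XX \<Longrightarrow> fst p \<in> carrier G \<and> snd p \<in> carrier G" for p unfolding XX_def by (simp add: mem_Times_iff)
  have zc': "p \<in> XX \<Longrightarrow> z p \<in> carrier G" for p using zc unfolding XX_def by blast
  have ac: "p \<in> XX \<Longrightarrow> a p \<in> carrier G" for p unfolding a_def using zc' kc' pc by simp
  have bc: "p \<in> XX \<Longrightarrow> b p \<in> carrier G" for p unfolding b_def using zc' hc' pc by simp
  have AX: "A \<subseteq> carrier G" unfolding A_def using ac by blast
  have BX: "B \<subseteq> carrier G" unfolding B_def using bc by blast
  have Pinj': "inj_on (\<lambda>pq. (a (fst pq) \<otimes> inv (b (snd pq)), tag pq)) (XX \<times> XX)"
    using Pinj unfolding a_def b_def XX_def .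
  have ad: "asymp_disjoint (carrier G) (ball_structure G \<kappa>) A B" unfolding asymp_disjoint_def
  proof
    fix E assume "E \<in> ball_structure G \<kappa>"
    then obtain I where I: "I \<subseteq> carrier G" "|I| <o \<kappa>" "E = ent G I" using ball_E by blast
    define I' where "I' = insert \<one> I"
    have I'c: "I' \<subseteq> carrier G" unfolding I'_def using I(1) by simp
    have I's: "|I'| <o \<kappa>" unfolding I'_def by (rule small_insert[OF I(2)])
    define Ds where "Ds = (\<lambda>(i,j). inv i \<otimes> j) ` (I' \<times> I')"
    have Dss: "|Ds| <o \<kappa>" unfolding Ds_def by (rule small_image[OF small_times[OF I's I's]])
    define Bad where "Bad = {pq \<in> XX \<times> XX. a (fst pq) \<otimes> inv (b (snd pq)) \<in> Ds}"
    have "inj_on (\<lambda>pq. (a (fst pq) \<otimes> inv (b (snd pq)), tag pq)) Bad"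
      using Pinj' unfolding Bad_def by (rule inj_on_subset) blast
    moreover have "(\<lambda>pq. (a (fst pq) \<otimes> inv (b (snd pq)), tag pq)) ` Bad \<subseteq> Ds \<times> {..<3}"
      unfolding Bad_def using tag3 by auto
    moreover have "|Ds \<times> {..<(3::nat)}| <o \<kappa>" by (rule small_times[OF Dss fin_small]) simp
    ultimately have Bads: "|Bad| <o \<kappa>" by (rule small_inj)
    have "E `` A \<inter> E `` B \<subseteq> (\<lambda>(i,pq). i \<otimes> a (fst pq)) ` (I' \<times> Bad)"
    proof
      fix w assume w: "w \<in> E `` A \<inter> E `` B"
      obtain i x where ix: "i \<in> I'" "x \<in> A" "x \<in> carrier G" "w = i \<otimes> x"
        using ent_elim[of w I A] w I(1,3) unfolding I'_def by blast
      obtain j y where jy: "j \<in> I'" "y \<in> B" "y \<in> carrier G" "w = j \<otimes> y"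
        using ent_elim[of w I B] w I(1,3) unfolding I'_def by blast
      obtain p where p: "p \<in> XX" "x = a p" using ix(2) unfolding A_def by blast
      obtain q where q: "q \<in> XX" "y = b q" using jy(2) unfolding B_def by blast
      have "x \<otimes> inv y = inv i \<otimes> j" using gc1[of i j x y] ix jy I'c by blast
      hence "a p \<otimes> inv (b q) \<in> Ds" unfolding Ds_def using ix(1) jy(1) p(2) q(2) by force
      hence "(p,q) \<in> Bad" unfolding Bad_def using p(1) q(1) by simp
      moreover have "w = (\<lambda>(i,pq). i \<otimes> a (fst pq)) (i, (p,q))" using ix(4) p(2) by simp
      ultimately show "w \<in> (\<lambda>(i,pq). i \<otimes> a (fst pq)) ` (I' \<times> Bad)" using ix(1) by blast
    qed
    moreover have "|(\<lambda>(i,pq). i \<otimes> a (fst pq)) ` (I' \<times> Bad)| <o \<kappa>"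
      by (rule small_image[OF small_times[OF I's Bads]])
    ultimately have "|E `` A \<inter> E `` B| <o \<kappa>" by (rule small_mono)
    moreover have "E `` A \<inter> E `` B \<subseteq> carrier G" using I(3) ent_sub by blast
    ultimately show "bounded_in (carrier G) (ball_structure G \<kappa>) (E `` A \<inter> E `` B)" using small_bnd by blast
  qed
  have zA: "\<forall>c\<in>carrier G. \<forall>r\<in>carrier G. \<forall>Ks. Ks \<subseteq> carrier G \<and> k r \<in> Ks \<longrightarrow> z (c,r) \<in> ent G Ks `` A"
  proof (intro ballI allI impI)
    fix c r Ks assume c: "c \<in> carrier G" and r: "r \<in> carrier G" and K: "Ks \<subseteq> carrier G \<and> k r \<in> Ks"
    have p: "(c,r) \<in> XX" unfolding XX_def using c r by simp
    have "z (c,r) = k r \<otimes> a (c,r)" unfolding a_def using gz[of "k r" "z (c,r)"] kc' r zc' p by simp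
    moreover have "a (c,r) \<in> A" unfolding A_def using p by blast
    ultimately show "z (c,r) \<in> ent G Ks `` A" using ent_mem[of "k r" Ks "a (c,r)" A] K AX by simp
  qed
  have zB: "\<forall>c\<in>carrier G. \<forall>r\<in>carrier G. \<forall>Ks. Ks \<subseteq> carrier G \<and> h c \<in> Ks \<longrightarrow> z (c,r) \<in> ent G Ks `` B"
  proof (intro ballI allI impI)
    fix c r Ks assume c: "c \<in> carrier G" and r: "r \<in> carrier G" and K: "Ks \<subseteq> carrier G \<and> h c \<in> Ks"
    have p: "(c,r) \<in> XX" unfolding XX_def using c r by simp
    have "z (c,r) = h c \<otimes> b (c,r)" unfolding b_def using gz[of "h c" "z (c,r)"] hc' c zc' p by simp
    moreover have "b (c,r) \<in> B" unfolding B_def using p by blast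
    ultimately show "z (c,r) \<in> ent G Ks `` B" using ent_mem[of "h c" Ks "b (c,r)" B] K BX by simp
  qed
  have "\<forall>c\<in>carrier G. \<forall>r\<in>carrier G. z (c,r) \<in> carrier G \<and> k r \<in> carrier G \<and> h c \<in> carrier G"
    using zc' kc' hc' unfolding XX_def by simp
  thus ?thesis using zinj AX BX ad zA zB by blast
qed

end

context bsetup
begin

lemma normal_imp:
  assumes nrm: "normal_ballean (carrier G) (ball_structure G \<kappa>)"
  shows "|carrier G| =o \<kappa> \<and> regularCard \<kappa>"
proof -
  obtain z k h A B where P1: "\<forall>c\<in>carrier G. \<forall>r\<in>carrier G. z (c,r) \<in> carrier G \<and> k r \<in> carrier G \<and> h c \<in> carrier G"
    and zinj: "inj_on z (carrier G \<times> carrier G)" and AX: "A \<subseteq> carrier G" and BX: "B \<subseteq> carrier G"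
    and ad: "asymp_disjoint (carrier G) (ball_structure G \<kappa>) A B"
    and zA: "\<forall>c\<in>carrier G. \<forall>r\<in>carrier G. \<forall>Ks. Ks \<subseteq> carrier G \<and> k r \<in> Ks \<longrightarrow> z (c,r) \<in> ent G Ks `` A"
    and zB: "\<forall>c\<in>carrier G. \<forall>r\<in>carrier G. \<forall>Ks. Ks \<subseteq> carrier G \<and> h c \<in> Ks \<longrightarrow> z (c,r) \<in> ent G Ks `` B"
    using config by (elim exE conjE) (rule that, assumption+)
  have "\<exists>U V. U \<subseteq> carrier G \<and> V \<subseteq> carrier G \<and> asymp_nbhd (carrier G) (ball_structure G \<kappa>) U A
      \<and> asymp_nbhd (carrier G) (ball_structure G \<kappa>) V B \<and> U \<inter> V = {}"
    using nrm AX BX ad unfolding normal_ballean_def by blast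
  then obtain U V where UV: "U \<subseteq> carrier G" "V \<subseteq> carrier G" "asymp_nbhd (carrier G) (ball_structure G \<kappa>) U A"
      "asymp_nbhd (carrier G) (ball_structure G \<kappa>) V B" "U \<inter> V = {}"
    by (elim exE conjE) (rule that, assumption+)
  have nbA: "|ent G Ks `` A - U| <o \<kappa>" if "Ks \<subseteq> carrier G" "|Ks| <o \<kappa>" for Ks
  proof -
    have "ent G Ks \<in> ball_structure G \<kappa>" by (rule ent_in[OF that])
    hence "bounded_in (carrier G) (ball_structure G \<kappa>) (ent G Ks `` A - U)" using UV(3) unfolding asymp_nbhd_def by blast
    thus ?thesis by (rule bnd_small)
  qed
  have nbB: "|ent G Ks `` B - V| <o \<kappa>" if "Ks \<subseteq> carrier G" "|Ks| <o \<kappa>" for Ks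
  proof -
    have "ent G Ks \<in> ball_structure G \<kappa>" by (rule ent_in[OF that])
    hence "bounded_in (carrier G) (ball_structure G \<kappa>) (ent G Ks `` B - V)" using UV(4) unfolding asymp_nbhd_def by blast
    thus ?thesis by (rule bnd_small)
  qed
  have zinj2: "c1 \<in> carrier G \<Longrightarrow> r1 \<in> carrier G \<Longrightarrow> c2 \<in> carrier G \<Longrightarrow> r2 \<in> carrier G \<Longrightarrow> z (c1,r1) = z (c2,r2) \<Longrightarrow> c1 = c2 \<and> r1 = r2"
    for c1 r1 c2 r2 using zinj unfolding inj_on_def by blast
  have notlt: "\<not> \<kappa> <o |carrier G|"
  proof
    assume lt: "\<kappa> <o |carrier G|"
    obtain R0 where R0: "R0 \<subseteq> carrier G" "|R0| =o \<kappa>" using exists_R0 by blast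
    define Xr where "Xr r = {c \<in> carrier G. z (c,r) \<notin> U}" for r
    have Xrs: "|Xr r| <o \<kappa>" if r: "r \<in> R0" for r
    proof -
      have rc: "r \<in> carrier G" using r R0(1) by blast
      have kr: "{k r} \<subseteq> carrier G" "|{k r}| <o \<kappa>" using P1 rc fin_small[of "{k r}"] carrier_inf by auto
      have "inj_on (\<lambda>c. z (c,r)) (Xr r)"
      proof (rule inj_onI)
        fix c1 c2 assume "c1 \<in> Xr r" "c2 \<in> Xr r" "z (c1,r) = z (c2,r)"
        thus "c1 = c2" using zinj2[of c1 r c2 r] rc unfolding Xr_def by blast
      qed
      moreover have "(\<lambda>c. z (c,r)) ` Xr r \<subseteq> ent G {k r} `` A - U"
      proof
        fix y assume "y \<in> (\<lambda>c. z (c,r)) ` Xr r"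
        then obtain c where c: "c \<in> Xr r" "y = z (c,r)" by blast
        have "z (c,r) \<in> ent G {k r} `` A" using zA c(1) rc kr(1) unfolding Xr_def by blast
        thus "y \<in> ent G {k r} `` A - U" using c unfolding Xr_def by blast
      qed
      ultimately show ?thesis using nbA[OF kr] by (rule small_inj)
    qed
    define U0 where "U0 = (\<Union>r\<in>R0. Xr r)"
    have "|U0| \<le>o \<kappa>" unfolding U0_def
    proof (rule card_of_UNION_ordLeq_infinite_Field[OF inf co])
      show "|R0| \<le>o \<kappa>" by (rule ordIso_imp_ordLeq[OF R0(2)])
      show "\<forall>i\<in>R0. |Xr i| \<le>o \<kappa>"
      proof
        fix i assume "i \<in> R0"
        thus "|Xr i| \<le>o \<kappa>" using Xrs ordLess_imp_ordLeq by blast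
      qed
    qed
    have "\<not> carrier G \<subseteq> U0"
    proof
      assume "carrier G \<subseteq> U0"
      hence "|carrier G| \<le>o |U0|" by (rule card_of_mono1)
      hence "|carrier G| \<le>o \<kappa>" using \<open>|U0| \<le>o \<kappa>\<close> by (rule ordLeq_transitive)
      thus False using not_ordLess_ordLeq[OF lt] by blast
    qed
    then obtain c where c: "c \<in> carrier G" "c \<notin> U0" by blast
    have hc: "{h c} \<subseteq> carrier G" "|{h c}| <o \<kappa>" using P1 c(1) fin_small[of "{h c}"] carrier_inf by auto
    have "inj_on (\<lambda>r. z (c,r)) R0"
    proof (rule inj_onI)
      fix r1 r2 assume "r1 \<in> R0" "r2 \<in> R0" "z (c,r1) = z (c,r2)"
      thus "r1 = r2" using zinj2[of c r1 c r2] c(1) R0(1) by blast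
    qed
    moreover have "(\<lambda>r. z (c,r)) ` R0 \<subseteq> ent G {h c} `` B - V"
    proof
      fix y assume "y \<in> (\<lambda>r. z (c,r)) ` R0"
      then obtain r where r: "r \<in> R0" "y = z (c,r)" by blast
      have rc: "r \<in> carrier G" using r(1) R0(1) by blast
      have "c \<notin> Xr r" using c(2) r(1) unfolding U0_def by blast
      hence "z (c,r) \<in> U" unfolding Xr_def using c(1) by blast
      hence "z (c,r) \<notin> V" using UV(5) by blast
      moreover have "z (c,r) \<in> ent G {h c} `` B" using zB c(1) rc hc(1) by blast
      ultimately show "y \<in> ent G {h c} `` B - V" using r(2) by blast
    qed
    ultimately have "|R0| <o \<kappa>" using nbB[OF hc] by (rule small_inj)
    thus False using not_ordLess_ordIso R0(2) by blast
  qed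
  have eq: "|carrier G| =o \<kappa>"
  proof -
    have "\<kappa> <o |carrier G| \<or> \<kappa> =o |carrier G|" using kle ordLeq_iff_ordLess_or_ordIso by blast
    thus ?thesis using notlt ordIso_symmetric by blast
  qed
  have reg: "regularCard \<kappa>"
  proof (rule ccontr)
    assume nreg: "\<not> regularCard \<kappa>"
    have "\<exists>K. K \<subseteq> Field \<kappa> \<and> cofinal K \<kappa> \<and> \<not> |K| =o \<kappa>"
      using nreg unfolding regularCard_def by simp
    then obtain K where K: "K \<subseteq> Field \<kappa>" "cofinal K \<kappa>" "\<not> |K| =o \<kappa>"
      by (elim exE conjE) (rule that, assumption+)
    have "|K| \<le>o \<kappa>" by (rule ordLeq_ordIso_trans[OF card_of_mono1[OF K(1)] card_of_Field_ordIso[OF co]])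
    hence Ks: "|K| <o \<kappa>" using K(3) ordLeq_iff_ordLess_or_ordIso[of "|K|" \<kappa>] by blast
    have "|Field \<kappa>| =o |carrier G|"
      using card_of_Field_ordIso[OF co] eq ordIso_symmetric ordIso_transitive by blast
    then obtain g where g: "bij_betw g (Field \<kappa>) (carrier G)" using card_of_ordIso by blast
    define I where "I a = g ` under \<kappa> a" for a
    have Ia: "a \<in> Field \<kappa> \<Longrightarrow> I a \<subseteq> carrier G \<and> |I a| <o \<kappa>" for a
    proof
      assume a: "a \<in> Field \<kappa>"
      have "g ` Field \<kappa> = carrier G" using g by (simp add: bij_betw_def)
      thus "I a \<subseteq> carrier G" unfolding I_def using under_Field[of \<kappa> a] by blast
      show "|I a| <o \<kappa>" unfolding I_def by (rule small_image[OF under_small[OF a]])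
    qed
    have KF: "a \<in> K \<Longrightarrow> a \<in> Field \<kappa>" for a using K(1) by blast
    define Q where "Q a = {p \<in> carrier G \<times> I a. z p \<notin> U}" for a
    have Qs: "|Q a| <o \<kappa>" if a: "a \<in> K" for a
    proof -
      note Ia' = Ia[OF KF[OF a]]
      have ks: "k ` I a \<subseteq> carrier G" "|k ` I a| <o \<kappa>" using P1 Ia' small_image by blast+
      have "inj_on z (Q a)" using zinj unfolding Q_def by (rule inj_on_subset) (use Ia' in blast)
      moreover have "z ` Q a \<subseteq> ent G (k ` I a) `` A - U"
      proof
        fix y assume "y \<in> z ` Q a"
        then obtain p where p: "p \<in> Q a" "y = z p" by blast
        obtain c r where "p = (c,r)" by (cases p)
        hence cr: "(c,r) \<in> Q a" "y = z (c,r)" using p by simp_all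
        have "c \<in> carrier G" "r \<in> carrier G" "r \<in> I a" using cr(1) Ia' unfolding Q_def by auto
        hence "z (c,r) \<in> ent G (k ` I a) `` A" using zA ks(1) by blast
        thus "y \<in> ent G (k ` I a) `` A - U" using cr unfolding Q_def by blast
      qed
      ultimately show ?thesis using nbA[OF ks] by (rule small_inj)
    qed
    have ne: "carrier G - fst ` Q a \<noteq> {}" if a: "a \<in> K" for a
    proof
      assume e: "carrier G - fst ` Q a = {}"
      have "|fst ` Q a| <o \<kappa>" by (rule small_image[OF Qs[OF a]])
      moreover have "carrier G \<subseteq> fst ` Q a" using e by blast
      ultimately have "|carrier G| <o \<kappa>" using small_mono[of "carrier G" "fst ` Q a"] by blast
      thus False using eq not_ordLess_ordIso by blast
    qed
    define cc where "cc a = (SOME c. c \<in> carrier G - fst ` Q a)" for a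
    have cc: "a \<in> K \<Longrightarrow> cc a \<in> carrier G - fst ` Q a" for a
      unfolding cc_def using ne by (meson ex_in_conv someI_ex)
    have ccU: "a \<in> K \<Longrightarrow> r \<in> I a \<Longrightarrow> z (cc a, r) \<in> U" for a r
    proof (rule ccontr)
      assume a: "a \<in> K" and r: "r \<in> I a" and n: "z (cc a, r) \<notin> U"
      have "(cc a, r) \<in> Q a" unfolding Q_def using cc[OF a] r n by blast
      hence "cc a \<in> fst ` Q a" by (metis fst_conv imageI)
      thus False using cc[OF a] by blast
    qed
    define J where "J = h ` cc ` K"
    have Jc: "J \<subseteq> carrier G" unfolding J_def using P1 cc by blast
    have Js: "|J| <o \<kappa>" unfolding J_def by (rule small_image[OF small_image[OF Ks]])
    have cov: "\<exists>a. a \<in> K \<and> r \<in> I a" if r: "r \<in> carrier G" for r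
    proof -
      define b where "b = inv_into (Field \<kappa>) g r"
      have b: "b \<in> Field \<kappa>" "g b = r" using g r unfolding b_def
        by (metis bij_betw_def bij_betw_inv_into_right inv_into_into)+
      obtain a where a: "a \<in> K" "b \<noteq> a" "(b,a) \<in> \<kappa>" using K(2) b(1) unfolding cofinal_def by blast
      hence "r \<in> I a" unfolding I_def under_def using b(2) by blast
      thus ?thesis using a(1) by blast
    qed
    define ar where "ar r = (SOME a. a \<in> K \<and> r \<in> I a)" for r
    have ar: "r \<in> carrier G \<Longrightarrow> ar r \<in> K \<and> r \<in> I (ar r)" for r
      unfolding ar_def using cov by (rule someI_ex)
    have "inj_on (\<lambda>r. z (cc (ar r), r)) (carrier G)"
    proof (rule inj_onI)
      fix r1 r2 assume r: "r1 \<in> carrier G" "r2 \<in> carrier G" "z (cc (ar r1), r1) = z (cc (ar r2), r2)"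
      have "cc (ar r1) \<in> carrier G" "cc (ar r2) \<in> carrier G" using cc ar r(1,2) by blast+
      thus "r1 = r2" using zinj2 r by blast
    qed
    moreover have "(\<lambda>r. z (cc (ar r), r)) ` carrier G \<subseteq> ent G J `` B - V"
    proof
      fix y assume "y \<in> (\<lambda>r. z (cc (ar r), r)) ` carrier G"
      then obtain r where r: "r \<in> carrier G" "y = z (cc (ar r), r)" by blast
      have a: "ar r \<in> K" "r \<in> I (ar r)" using ar[OF r(1)] by blast+
      have ccc: "cc (ar r) \<in> carrier G" using cc[OF a(1)] by blast
      have "z (cc (ar r), r) \<in> U" by (rule ccU[OF a])
      hence "z (cc (ar r), r) \<notin> V" using UV(5) by blast
      moreover have "h (cc (ar r)) \<in> J" unfolding J_def using a(1) by blast
      hence "z (cc (ar r), r) \<in> ent G J `` B" using zB ccc r(1) Jc by blast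
      ultimately show "y \<in> ent G J `` B - V" using r(2) by blast
    qed
    ultimately have "|carrier G| <o \<kappa>" using nbB[OF Jc Js] by (rule small_inj)
    thus False using eq not_ordLess_ordIso by blast
  qed
  show ?thesis using eq reg by blast
qed

end

theorem theorem1p18:
  fixes G :: "('a, 'm) monoid_scheme" and \<kappa> :: "'b rel"
  assumes "group G"
    and "Card_order \<kappa>" and "\<not> finite (Field \<kappa>)"
    and "\<kappa> \<le>o |carrier G|"
  shows "(lin_ordered_base (ball_structure G \<kappa>)
            \<longleftrightarrow> lin_ordered_base (bornology (carrier G) (ball_structure G \<kappa>)))
       \<and> (lin_ordered_base (bornology (carrier G) (ball_structure G \<kappa>))
            \<longleftrightarrow> bounded_growth (carrier G) (ball_structure G \<kappa>))
       \<and> (bounded_growth (carrier G) (ball_structure G \<kappa>)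
            \<longleftrightarrow> ( |carrier G| =o \<kappa> \<and> regularCard \<kappa>))
       \<and> ((regularCard \<kappa> \<or> solvable G) \<longrightarrow>
            (( |carrier G| =o \<kappa> \<and> regularCard \<kappa>) \<longleftrightarrow> normal_ballean (carrier G) (ball_structure G \<kappa>)))"
proof -
  have bs: "bsetup G \<kappa>"
    by (intro bsetup.intro bsetup_axioms.intro) (rule assms)+
  have c4l: "|carrier G| =o \<kappa> \<and> regularCard \<kappa> \<Longrightarrow> lin_ordered_base (bornology (carrier G) (ball_structure G \<kappa>))"
    using bsetup.reg_lin[OF bs] by blast
  have l4: "lin_ordered_base (bornology (carrier G) (ball_structure G \<kappa>)) \<Longrightarrow> |carrier G| =o \<kappa> \<and> regularCard \<kappa>"
    using bsetup.lin_normal[OF bs] bsetup.normal_imp[OF bs] by blast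
  have c4g: "|carrier G| =o \<kappa> \<and> regularCard \<kappa> \<Longrightarrow> bounded_growth (carrier G) (ball_structure G \<kappa>)"
    using bsetup.reg_growth[OF bs] by blast
  have g4: "bounded_growth (carrier G) (ball_structure G \<kappa>) \<Longrightarrow> |carrier G| =o \<kappa> \<and> regularCard \<kappa>"
  proof -
    assume bg: "bounded_growth (carrier G) (ball_structure G \<kappa>)"
    have "\<not> \<kappa> <o |carrier G|" by (rule bsetup.growth_le[OF bs bg])
    moreover have "\<kappa> <o |carrier G| \<or> \<kappa> =o |carrier G|" using assms(4) ordLeq_iff_ordLess_or_ordIso by blast
    ultimately have eq: "|carrier G| =o \<kappa>" using ordIso_symmetric by blast
    thus ?thesis using bsetup.growth_reg[OF bs bg eq] by blast
  qed
  have c4n: "|carrier G| =o \<kappa> \<and> regularCard \<kappa> \<Longrightarrow> normal_ballean (carrier G) (ball_structure G \<kappa>)"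
    using c4l bsetup.lin_normal[OF bs] by blast
  have n4: "normal_ballean (carrier G) (ball_structure G \<kappa>) \<Longrightarrow> |carrier G| =o \<kappa> \<and> regularCard \<kappa>"
    by (rule bsetup.normal_imp[OF bs])
  show ?thesis using bsetup.lin12[OF bs] c4l l4 c4g g4 c4n n4 by blast
qed

end
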